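(* Let $n\ge 2$. For any two locally valid MV assignments $\mu_1,\mu_2$ of $M_{2,n}$ there exist proper $3$-colorings $\gamma,\beta$ of $M^*_{2,n}$ corresponding to $\mu_1,\mu_2$ respectively such that $$\min_{H\in 2\mathbb{Z}}\ \frac12\sum_{v\in V(M^*_{2,n})}\bigl|H+h_{\gamma,v_{1,1}}(\beta,v)\bigr|\le\left\lceil \frac{n^2}{2}\right\rceil .$$ Consequently the distance between $\mu_1$ and $\mu_2$ in ${\rm OFG}(M_{2,n})$ is at most $\lceil n^2/2\rceil$, the distance between two opposite vertices of degree $2$; that is, a pair of vertices at maximal distance is formed by two opposite degree-$2$ vertices.
   Context: The $2\times n$ Miura-ori $M_{2,n}$ has faces $\alpha_{i,j}$ ($i\in\{1,2\}$, $j\in\{1,\dots,n\}$), interior vertices $x_1,\dots,x_{n-1}$, creases $e_0$ and $e_{3k-1},e_{3k},e_{3k+1}$ ($k=1,\dots,n-1$); at $x_k$ the creases are left $e_{3k-3}$, top $e_{3k-1}$, right $e_{3k}$, bottom $e_{3k+1}$. Face $\alpha_{1,j}$ is bordered by those of $e_{3j-4}$ (iff $j\ge2$), $e_{3j-3}$, $e_{3j-1}$ (iff $j\le n-1$); $\alpha_{2,j}$ by those of $e_{3j-2}$ (iff $j\ge2$), $e_{3j-3}$, $e_{3j+1}$ (iff $j\le n-1$). An MV assignment $\mu$ maps creases to $\{1,-1\}$; it is locally valid if for each $k$ exactly one of $\mu(e_{3k-1}),\mu(e_{3k}),\mu(e_{3k+1})$ differs from $\mu(e_{3k-3})$. The face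 flip $\mu_\alpha$ negates $\mu$ on the creases bordering $\alpha$; $\alpha$ is flippable if $\mu,\mu_\alpha$ are both locally valid. ${\rm OFG}(M_{2,n})$ has the locally valid assignments as vertices, $\mu\sim\mu_\alpha$ for flippable $\alpha$. Opposite assignments: same flippable faces and opposite parity on every crease (i.e., $\mu$ and $-\mu$). $M^*_{2,n}$ is the grid graph on $v_{i,j}$ ($i\in\{1,2\}$, $1\le j\le n$), $v_{i,j}$ adjacent to $v_{i,j\pm1}$, $v_{3-i,j}$; colors in $\mathbb{Z}_3$. A proper $3$-coloring $\gamma$ corresponds to $\mu$ if, mod $3$: $\gamma(v_{1,j+1})=\gamma(v_{1,j})+\mu(e_{3j-1})$ for $1\le j\le n-1$; $\gamma(v_{2,n})=\gamma(v_{1,n})+\mu(e_{3n-3})$; $\gamma(v_{2,j-1})=\gamma(v_{2,j})+\mu(e_{3j-2})$ for $2\le j\le n$ (each locally valid $\mu$ corresponds to exactly three colorings, one per value of $\gamma(v_{1,1})$). Edge weight $w(\gamma,\overrightarrow{ab})\in\{1,-1\}$ with $w\equiv\gamma(b)-\gamma(a)$ mod $3$; path weight is the sum of edge weights (path independent). Relative height $h_{\gamma,u}(\beta,v)=w(\beta,P_{u,v})-w(\gamma,P_{u,v})$ for a directed path $P_{u,v}$ from $u$ to $v$. *)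

theory Defs
  imports Complex_Main "HOL-Number_Theory.Cong"
begin

text \<open>Creases are indexed by natural numbers: e_0 and e_{3k-1}, e_{3k}, e_{3k+1}
  for k = 1..n-1, i.e. the index set {0} \<union> {2..3n-2}.\<close>

definition creases :: "nat \<Rightarrow> nat set" where
  "creases n = {0} \<union> (\<Union>k\<in>{1..n-1}. {3*k-1, 3*k, 3*k+1})"

definition faces :: "nat \<Rightarrow> (nat \<times> nat) set" where
  "faces n = {1,2} \<times> {1..n}"

definition face_border :: "nat \<Rightarrow> nat \<times> nat \<Rightarrow> nat set" where
  "face_border n \<alpha> = (case \<alpha> of (i,j) \<Rightarrow>
     if i = 1 then {c. (c = 3*j-4 \<and> j \<ge> 2) \<or> c = 3*j-3 \<or> (c = 3*j-1 \<and> j \<le> n-1)}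
     else {c. (c = 3*j-2 \<and> j \<ge> 2) \<or> c = 3*j-3 \<or> (c = 3*j+1 \<and> j \<le> n-1)})"

text \<open>An MV assignment: values in {1,-1} on the creases; we fix the value 0 off the
  creases so that assignments are determined by their values on the creases.\<close>
definition mv_assignment :: "nat \<Rightarrow> (nat \<Rightarrow> int) \<Rightarrow> bool" where
  "mv_assignment n \<mu> \<longleftrightarrow> (\<forall>c\<in>creases n. \<mu> c \<in> {1,-1}) \<and> (\<forall>c. c \<notin> creases n \<longrightarrow> \<mu> c = 0)"

definition locally_valid :: "nat \<Rightarrow> (nat \<Rightarrow> int) \<Rightarrow> bool" where
  "locally_valid n \<mu> \<longleftrightarrow> mv_assignment n \<mu> \<and>
     (\<forall>k\<in>{1..n-1}. card {c \<in> {3*k-1, 3*k, 3*k+1}. \<mu> c \<noteq> \<mu> (3*k-3)} = 1)"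

definition face_flip :: "nat \<Rightarrow> nat \<times> nat \<Rightarrow> (nat \<Rightarrow> int) \<Rightarrow> (nat \<Rightarrow> int)" where
  "face_flip n \<alpha> \<mu> = (\<lambda>c. if c \<in> face_border n \<alpha> then - \<mu> c else \<mu> c)"

definition flippable :: "nat \<Rightarrow> (nat \<Rightarrow> int) \<Rightarrow> nat \<times> nat \<Rightarrow> bool" where
  "flippable n \<mu> \<alpha> \<longleftrightarrow> \<alpha> \<in> faces n \<and> locally_valid n \<mu> \<and> locally_valid n (face_flip n \<alpha> \<mu>)"

definition ofg_adj :: "nat \<Rightarrow> (nat \<Rightarrow> int) \<Rightarrow> (nat \<Rightarrow> int) \<Rightarrow> bool" where
  "ofg_adj n \<mu> \<nu> \<longleftrightarrow> (\<exists>\<alpha>. flippable n \<mu> \<alpha> \<and> \<nu> = face_flip n \<alpha> \<mu>)"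

definition ofg_degree :: "nat \<Rightarrow> (nat \<Rightarrow> int) \<Rightarrow> nat" where
  "ofg_degree n \<mu> = card {\<nu>. ofg_adj n \<mu> \<nu>}"

definition ofg_dist_is :: "nat \<Rightarrow> (nat \<Rightarrow> int) \<Rightarrow> (nat \<Rightarrow> int) \<Rightarrow> nat \<Rightarrow> bool" where
  "ofg_dist_is n \<mu> \<nu> d \<longleftrightarrow> (ofg_adj n ^^ d) \<mu> \<nu> \<and> (\<forall>k<d. \<not> (ofg_adj n ^^ k) \<mu> \<nu>)"

definition dual_vertices :: "nat \<Rightarrow> (nat \<times> nat) set" where
  "dual_vertices n = {1,2} \<times> {1..n}"

definition dual_adj :: "nat \<Rightarrow> nat \<times> nat \<Rightarrow> nat \<times> nat \<Rightarrow> bool" where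
  "dual_adj n u v \<longleftrightarrow> u \<in> dual_vertices n \<and> v \<in> dual_vertices n \<and>
     ((fst u = fst v \<and> (snd v = snd u + 1 \<or> snd u = snd v + 1)) \<or>
      (snd u = snd v \<and> fst u \<noteq> fst v))"

text \<open>Colors in Z_3 represented by the integers 0,1,2.\<close>
definition proper_3coloring :: "nat \<Rightarrow> (nat \<times> nat \<Rightarrow> int) \<Rightarrow> bool" where
  "proper_3coloring n \<gamma> \<longleftrightarrow> (\<forall>v\<in>dual_vertices n. \<gamma> v \<in> {0,1,2}) \<and>
     (\<forall>u v. dual_adj n u v \<longrightarrow> \<gamma> u \<noteq> \<gamma> v)"

definition corresponds :: "nat \<Rightarrow> (nat \<times> nat \<Rightarrow> int) \<Rightarrow> (nat \<Rightarrow> int) \<Rightarrow> bool" where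
  "corresponds n \<gamma> \<mu> \<longleftrightarrow>
     (\<forall>j\<in>{1..n-1}. [\<gamma> (1, j+1) = \<gamma> (1, j) + \<mu> (3*j-1)] (mod 3)) \<and>
     [\<gamma> (2, n) = \<gamma> (1, n) + \<mu> (3*n-3)] (mod 3) \<and>
     (\<forall>j\<in>{2..n}. [\<gamma> (2, j-1) = \<gamma> (2, j) + \<mu> (3*j-2)] (mod 3))"

definition edge_weight :: "(nat \<times> nat \<Rightarrow> int) \<Rightarrow> nat \<times> nat \<Rightarrow> nat \<times> nat \<Rightarrow> int" where
  "edge_weight \<gamma> a b = (if (\<gamma> b - \<gamma> a) mod 3 = 1 then 1 else -1)"

fun walk_weight :: "(nat \<times> nat \<Rightarrow> int) \<Rightarrow> (nat \<times> nat) list \<Rightarrow> int" where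
  "walk_weight \<gamma> (a # b # rest) = edge_weight \<gamma> a b + walk_weight \<gamma> (b # rest)"
| "walk_weight \<gamma> _ = 0"

text \<open>A fixed directed path from v_{1,1} to v_{i,j}: along the first row to v_{1,j},
  then (if i = 2) down to v_{2,j}.  (Path weights are path independent.)\<close>
definition path_from_v11 :: "nat \<times> nat \<Rightarrow> (nat \<times> nat) list" where
  "path_from_v11 v = map (\<lambda>k. (1::nat, k)) [1..<snd v + 1] @ (if fst v = 2 then [(2, snd v)] else [])"

definition rel_height :: "(nat \<times> nat \<Rightarrow> int) \<Rightarrow> (nat \<times> nat \<Rightarrow> int) \<Rightarrow> nat \<times> nat \<Rightarrow> int" where
  "rel_height \<gamma> \<beta> v = walk_weight \<beta> (path_from_v11 v) - walk_weight \<gamma> (path_from_v11 v)"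

end

theory Submission
  imports Defs
begin

lemma card3: "p\<noteq>q \<Longrightarrow> p\<noteq>r \<Longrightarrow> q\<noteq>r \<Longrightarrow> card {c\<in>{p,q,r}. P c} = (if P p then 1 else 0) + (if P q then 1 else 0) + (if P r then 1 else (0::nat))"
proof -
  assume a: "p\<noteq>q" "p\<noteq>r" "q\<noteq>r"
  have e: "{c\<in>{p,q,r}. P c} = (if P p then {p} else {}) \<union> (if P q then {q} else {}) \<union> (if P r then {r} else {})"
    by auto
  show ?thesis unfolding e using a by (cases "P p"; cases "P q"; cases "P r") auto
qed

lemma creases_iff: "c \<in> creases n \<longleftrightarrow> c = 0 \<or> (2 \<le> c \<and> c + 2 \<le> 3*n)"
proof
  assume "c \<in> creases n" then show "c = 0 \<or> (2 \<le> c \<and> c + 2 \<le> 3*n)"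
    unfolding creases_def by auto
next
  assume h: "c = 0 \<or> (2 \<le> c \<and> c + 2 \<le> 3*n)"
  show "c \<in> creases n"
  proof (cases "c = 0")
    case False
    define k where "k = (c+1) div 3"
    have "k \<in> {1..n-1}" "c \<in> {3*k-1, 3*k, 3*k+1}" using h False unfolding k_def by auto
    then show ?thesis unfolding creases_def by blast
  qed (simp add: creases_def)
qed

lemma mv_val: "mv_assignment n \<mu> \<Longrightarrow> c \<in> creases n \<Longrightarrow> \<mu> c = 1 \<or> \<mu> c = -1"
  unfolding mv_assignment_def by auto

lemma crease_idx:
  assumes "1 \<le> k" "k < n"
  shows "3*k-1 \<in> creases n" "3*k \<in> creases n" "3*k+1 \<in> creases n" "3*k-3 \<in> creases n"
  using assms by (auto simp: creases_iff)

lemma crease_idx2: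
  assumes "1 \<le> j" "j \<le> n"
  shows "3*j-3 \<in> creases n"
  using assms by (auto simp: creases_iff)

lemma lv_iff:
  assumes mv: "mv_assignment n \<mu>"
  shows "locally_valid n \<mu> \<longleftrightarrow> (\<forall>k. 1 \<le> k \<and> k < n \<longrightarrow> \<mu>(3*k-1) + \<mu>(3*k) + \<mu>(3*k+1) = \<mu>(3*k-3))"
proof -
  have "card {c \<in> {3*k-1, 3*k, 3*k+1}. \<mu> c \<noteq> \<mu> (3*k-3)} = 1 \<longleftrightarrow> \<mu>(3*k-1) + \<mu>(3*k) + \<mu>(3*k+1) = \<mu>(3*k-3)" 
    if "1 \<le> k" "k < n" for k
  proof -
    have d: "3*k-1 \<noteq> 3*k" "3*k-1 \<noteq> 3*k+1" "3*k \<noteq> 3*k+1" using that by auto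
    have v: "\<mu>(3*k-1) = 1 \<or> \<mu>(3*k-1) = -1" "\<mu>(3*k) = 1 \<or> \<mu>(3*k) = -1"
       "\<mu>(3*k+1) = 1 \<or> \<mu>(3*k+1) = -1" "\<mu>(3*k-3) = 1 \<or> \<mu>(3*k-3) = -1"
      using mv_val[OF mv] crease_idx[OF that] by auto
    show ?thesis unfolding card3[OF d] using v by (elim disjE) simp_all
  qed
  then show ?thesis using mv unfolding locally_valid_def by auto
qed

definition rep :: "nat \<Rightarrow> (nat \<Rightarrow> int) \<Rightarrow> (nat \<times> nat \<Rightarrow> int) \<Rightarrow> bool" where
 "rep n \<mu> h \<longleftrightarrow> (\<forall>k. 1 \<le> k \<and> k < n \<longrightarrow> \<mu>(3*k-1) = h(1,k+1) - h(1,k) \<and> \<mu>(3*k+1) = h(2,k) - h(2,k+1))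
     \<and> (\<forall>j. 1 \<le> j \<and> j \<le> n \<longrightarrow> \<mu>(3*j-3) = h(2,j) - h(1,j))"

definition hgt :: "(nat \<Rightarrow> int) \<Rightarrow> nat \<times> nat \<Rightarrow> int" where
 "hgt \<mu> v = (\<Sum>k\<in>{1..<snd v}. \<mu>(3*k-1)) + (if fst v = 2 then \<mu>(3*snd v - 3) else 0)"

lemma rep_hgt: assumes "locally_valid n \<mu>" shows "rep n \<mu> (hgt \<mu>)" "hgt \<mu> (1,1) = 0"
proof -
  have mv: "mv_assignment n \<mu>" using assms locally_valid_def by auto
  have cyc: "\<And>k. 1 \<le> k \<Longrightarrow> k < n \<Longrightarrow> \<mu>(3*k-1) + \<mu>(3*k) + \<mu>(3*k+1) = \<mu>(3*k-3)"
    using assms lv_iff[OF mv] by auto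
  have s: "(\<Sum>k\<in>{1..<k+1}. \<mu>(3*k-1)) = (\<Sum>k\<in>{1..<k}. \<mu>(3*k-1)) + \<mu>(3*k-1)" if "1 \<le> k" for k
    using that by simp
  have e: "3*(k+1)-3 = 3*k" for k :: nat by simp
  show "rep n \<mu> (hgt \<mu>)" unfolding rep_def hgt_def
    using s cyc e by (auto simp: algebra_simps)
  show "hgt \<mu> (1,1) = 0" by (simp add: hgt_def)
qed

lemma rep_lv: assumes "mv_assignment n \<mu>" "rep n \<mu> h" shows "locally_valid n \<mu>"
proof -
  have "\<mu>(3*k-1) + \<mu>(3*k) + \<mu>(3*k+1) = \<mu>(3*k-3)" if "1 \<le> k" "k < n" for k
  proof -
    have "\<forall>j. 1 \<le> j \<and> j \<le> n \<longrightarrow> \<mu>(3*j-3) = h(2,j) - h(1,j)" using assms(2) unfolding rep_def by auto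
    then have a: "\<mu>(3*(k+1)-3) = h(2,k+1) - h(1,k+1)" using that by (metis (no_types) le_add2 Suc_leI Suc_eq_plus1)
    have b: "\<mu>(3*k-3) = h(2,k) - h(1,k)" using assms(2) that unfolding rep_def by auto
    have c: "\<mu>(3*k-1) = h(1,k+1) - h(1,k)" "\<mu>(3*k+1) = h(2,k) - h(2,k+1)" using assms(2) that unfolding rep_def by auto
    have e: "3*(k+1)-3 = 3*k" by simp
    show ?thesis using a b c unfolding e by simp
  qed
  then show ?thesis using lv_iff[OF assms(1)] by auto
qed

lemma rep_edges:
  assumes "mv_assignment n \<mu>" "rep n \<mu> h"
  shows "\<And>k. 1 \<le> k \<Longrightarrow> k < n \<Longrightarrow> \<bar>h(1,k+1) - h(1,k)\<bar> = 1"
    "\<And>k. 1 \<le> k \<Longrightarrow> k < n \<Longrightarrow> \<bar>h(2,k+1) - h(2,k)\<bar> = 1"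
    "\<And>j. 1 \<le> j \<Longrightarrow> j \<le> n \<Longrightarrow> \<bar>h(2,j) - h(1,j)\<bar> = 1"
proof -
  fix k assume k: "1 \<le> k" "k < n"
  have "\<mu>(3*k-1) = 1 \<or> \<mu>(3*k-1) = -1" "\<mu>(3*k+1) = 1 \<or> \<mu>(3*k+1) = -1"
    using mv_val[OF assms(1)] crease_idx[OF k] by auto
  then show "\<bar>h(1,k+1) - h(1,k)\<bar> = 1" "\<bar>h(2,k+1) - h(2,k)\<bar> = 1"
    using assms(2) k unfolding rep_def by auto
next
  fix j assume j: "1 \<le> j" "j \<le> n"
  have "\<mu>(3*j-3) = 1 \<or> \<mu>(3*j-3) = -1"
    using mv_val[OF assms(1)] crease_idx2[OF j] by auto
  then show "\<bar>h(2,j) - h(1,j)\<bar> = 1" using assms(2) j unfolding rep_def by auto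
qed

lemma rep_unique:
  assumes "rep n \<mu> h1" "rep n \<mu> h2" "i \<in> {1,2}" "1 \<le> j" "j \<le> n"
  shows "h2 (i,j) - h1 (i,j) = h2 (1,1) - h1 (1,1)"
proof -
  have r1: "h2 (1,j) - h1 (1,j) = h2 (1,1) - h1 (1,1)" if "1 \<le> j" "j \<le> n" for j
    using that
  proof (induction j rule: nat_induct_at_least)
    case base then show ?case by simp
  next
    case (Suc m)
    then have "\<mu>(3*m-1) = h1(1,m+1) - h1(1,m)" "\<mu>(3*m-1) = h2(1,m+1) - h2(1,m)"
      using assms(1,2) unfolding rep_def by auto
    then show ?case using Suc by simp
  qed
  have "\<mu>(3*j-3) = h1(2,j) - h1(1,j)" "\<mu>(3*j-3) = h2(2,j) - h2(1,j)"
    using assms(1,2,4,5) unfolding rep_def by auto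
  then show ?thesis using r1[OF assms(4,5)] assms(3) by auto
qed

lemma B1: "1 \<le> k \<Longrightarrow> k < n \<Longrightarrow> i \<in> {1,2} \<Longrightarrow> 1 \<le> j \<Longrightarrow>
   3*k-1 \<in> face_border n (i,j) \<longleftrightarrow> i = 1 \<and> (k = j \<or> k+1 = j)"
  unfolding face_border_def by (auto; presburger)
lemma B2: "1 \<le> k \<Longrightarrow> k < n \<Longrightarrow> i \<in> {1,2} \<Longrightarrow> 1 \<le> j \<Longrightarrow>
   3*k+1 \<in> face_border n (i,j) \<longleftrightarrow> i = 2 \<and> (k = j \<or> k+1 = j)"
  unfolding face_border_def by (auto; presburger)
lemma B3: "1 \<le> k \<Longrightarrow> i \<in> {1,2} \<Longrightarrow> 1 \<le> j \<Longrightarrow>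
   3*k-3 \<in> face_border n (i,j) \<longleftrightarrow> k = j"
  unfolding face_border_def by (auto; presburger)
lemma B4: "1 \<le> k \<Longrightarrow> i \<in> {1,2} \<Longrightarrow> 1 \<le> j \<Longrightarrow>
   3*k \<in> face_border n (i,j) \<longleftrightarrow> k+1 = j"
  unfolding face_border_def by (auto; presburger)

lemma mv_flip: "mv_assignment n \<mu> \<Longrightarrow> mv_assignment n (face_flip n \<alpha> \<mu>)"
  unfolding mv_assignment_def face_flip_def by auto

definition lext :: "nat \<Rightarrow> (nat\<times>nat \<Rightarrow> int) \<Rightarrow> nat\<times>nat \<Rightarrow> bool" where
 "lext n h v \<longleftrightarrow> (case v of (i,j) \<Rightarrow>
    (i = 1 \<longrightarrow> (2 \<le> j \<longrightarrow> h(1,j-1) = h(2,j)) \<and> (j < n \<longrightarrow> h(1,j+1) = h(2,j))) \<and>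
    (i = 2 \<longrightarrow> (2 \<le> j \<longrightarrow> h(2,j-1) = h(1,j)) \<and> (j < n \<longrightarrow> h(2,j+1) = h(1,j))))"

definition fh :: "(nat\<times>nat \<Rightarrow> int) \<Rightarrow> nat\<times>nat \<Rightarrow> (nat\<times>nat \<Rightarrow> int)" where
 "fh h v = h(v := 2 * h(3 - fst v, snd v) - h v)"

lemma flip_rep:
  assumes "rep n \<mu> h" "i \<in> {1,2}" "1 \<le> j" "j \<le> n" "lext n h (i,j)"
  shows "rep n (face_flip n (i,j) \<mu>) (fh h (i,j))"
proof -
  let ?m = "face_flip n (i,j) \<mu>" and ?h = "fh h (i,j)"
  have t: "?m(3*k-1) = ?h(1,k+1) - ?h(1,k)" "?m(3*k+1) = ?h(2,k) - ?h(2,k+1)" if k: "1 \<le> k" "k < n" for k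
  proof -
    have r: "\<mu>(3*k-1) = h(1,k+1) - h(1,k)" "\<mu>(3*k+1) = h(2,k) - h(2,k+1)" using assms(1) k unfolding rep_def by auto
    show "?m(3*k-1) = ?h(1,k+1) - ?h(1,k)"
      unfolding face_flip_def B1[OF k assms(2,3)] fh_def using r assms(2,5) k unfolding lext_def by auto
    show "?m(3*k+1) = ?h(2,k) - ?h(2,k+1)"
      unfolding face_flip_def B2[OF k assms(2,3)] fh_def using r assms(2,5) k unfolding lext_def by auto
  qed
  have v: "?m(3*k-3) = ?h(2,k) - ?h(1,k)" if k: "1 \<le> k" "k \<le> n" for k
  proof -
    have r: "\<mu>(3*k-3) = h(2,k) - h(1,k)" using assms(1) k unfolding rep_def by auto
    show ?thesis
      unfolding face_flip_def B3[OF k(1) assms(2,3)] fh_def using r assms(2,5) k unfolding lext_def by auto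
  qed
  show ?thesis unfolding rep_def using t v by auto
qed

lemma rep_facts:
  assumes "rep n \<mu> h"
  shows "\<And>k. 1 \<le> k \<Longrightarrow> k < n \<Longrightarrow> \<mu>(3*k-1) = h(1,k+1) - h(1,k)"
    "\<And>k. 1 \<le> k \<Longrightarrow> k < n \<Longrightarrow> \<mu>(3*k+1) = h(2,k) - h(2,k+1)"
    "\<And>k. 1 \<le> k \<Longrightarrow> k < n \<Longrightarrow> \<mu>(3*k) = h(2,k+1) - h(1,k+1)"
    "\<And>k. 1 \<le> k \<Longrightarrow> k \<le> n \<Longrightarrow> \<mu>(3*k-3) = h(2,k) - h(1,k)"
proof -
  fix k assume k: "1 \<le> k" "k < n"
  then show "\<mu>(3*k-1) = h(1,k+1) - h(1,k)" "\<mu>(3*k+1) = h(2,k) - h(2,k+1)" using assms unfolding rep_def by auto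
  have "\<forall>j. 1 \<le> j \<and> j \<le> n \<longrightarrow> \<mu>(3*j-3) = h(2,j) - h(1,j)" using assms unfolding rep_def by auto
  then have "\<mu>(3*(k+1)-3) = h(2,k+1) - h(1,k+1)" using k by (metis (no_types) le_add2 Suc_leI Suc_eq_plus1)
  then show "\<mu>(3*k) = h(2,k+1) - h(1,k+1)" by simp
next
  fix k assume k: "1 \<le> k" "k \<le> n"
  then show "\<mu>(3*k-3) = h(2,k) - h(1,k)" using assms unfolding rep_def by auto
qed

lemma flippable_iff:
  assumes lv: "locally_valid n \<mu>" and r: "rep n \<mu> h" and f: "(i,j) \<in> faces n"
  shows "flippable n \<mu> (i,j) \<longleftrightarrow> lext n h (i,j)"
proof
  have mv: "mv_assignment n \<mu>" using lv locally_valid_def by auto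
  have ij: "i \<in> {1,2}" "1 \<le> j" "j \<le> n" using f unfolding faces_def by auto
  assume "flippable n \<mu> (i,j)"
  then have lv': "locally_valid n (face_flip n (i,j) \<mu>)" unfolding flippable_def by auto
  let ?m = "face_flip n (i,j) \<mu>"
  have cyc: "\<And>k. 1 \<le> k \<Longrightarrow> k < n \<Longrightarrow> ?m(3*k-1) + ?m(3*k) + ?m(3*k+1) = ?m(3*k-3)"
    using lv' lv_iff[OF mv_flip[OF mv]] by auto
  have cyc0: "\<And>k. 1 \<le> k \<Longrightarrow> k < n \<Longrightarrow> \<mu>(3*k-1) + \<mu>(3*k) + \<mu>(3*k+1) = \<mu>(3*k-3)"
    using lv lv_iff[OF mv] by auto
  have A: "(j < n \<longrightarrow> (i = 1 \<longrightarrow> h(1,j+1) = h(2,j)) \<and> (i = 2 \<longrightarrow> h(2,j+1) = h(1,j)))"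
  proof
    assume jn: "j < n"
    have e1: "?m(3*j-1) + ?m(3*j) + ?m(3*j+1) = ?m(3*j-3)" using cyc[OF ij(2) jn] .
    have e2: "\<mu>(3*j-1) + \<mu>(3*j) + \<mu>(3*j+1) = \<mu>(3*j-3)" using cyc0[OF ij(2) jn] .
    have m: "?m(3*j-1) = (if i = 1 then - \<mu>(3*j-1) else \<mu>(3*j-1))"
       "?m(3*j) = \<mu>(3*j)" "?m(3*j+1) = (if i = 2 then - \<mu>(3*j+1) else \<mu>(3*j+1))"
       "?m(3*j-3) = - \<mu>(3*j-3)"
      unfolding face_flip_def using B1[OF ij(2) jn ij(1,2)] B2[OF ij(2) jn ij(1,2)]
        B4[OF ij(2) ij(1,2)] B3[OF ij(2) ij(1,2)] by auto
    show "(i = 1 \<longrightarrow> h(1,j+1) = h(2,j)) \<and> (i = 2 \<longrightarrow> h(2,j+1) = h(1,j))"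
      using e1 e2 ij(1) unfolding m rep_facts(1,2,3)[OF r ij(2) jn] rep_facts(4)[OF r ij(2) ij(3)]
      by auto
  qed
  have B: "(2 \<le> j \<longrightarrow> (i = 1 \<longrightarrow> h(1,j-1) = h(2,j)) \<and> (i = 2 \<longrightarrow> h(2,j-1) = h(1,j)))"
  proof
    assume j2: "2 \<le> j"
    define k where "k = j - 1"
    have k: "1 \<le> k" "k < n" "j = k+1" using j2 ij unfolding k_def by auto
    have e1: "?m(3*k-1) + ?m(3*k) + ?m(3*k+1) = ?m(3*k-3)" using cyc[OF k(1,2)] .
    have e2: "\<mu>(3*k-1) + \<mu>(3*k) + \<mu>(3*k+1) = \<mu>(3*k-3)" using cyc0[OF k(1,2)] .
    have m: "?m(3*k-1) = (if i = 1 then - \<mu>(3*k-1) else \<mu>(3*k-1))"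
       "?m(3*k) = - \<mu>(3*k)" "?m(3*k+1) = (if i = 2 then - \<mu>(3*k+1) else \<mu>(3*k+1))"
       "?m(3*k-3) = \<mu>(3*k-3)"
      unfolding face_flip_def using B1[OF k(1,2) ij(1,2)] B2[OF k(1,2) ij(1,2)]
        B4[OF k(1) ij(1,2)] B3[OF k(1) ij(1,2)] k by auto
    show "(i = 1 \<longrightarrow> h(1,j-1) = h(2,j)) \<and> (i = 2 \<longrightarrow> h(2,j-1) = h(1,j))"
      using e1 e2 ij(1) k(3) unfolding m rep_facts(1,2,3)[OF r k(1,2)] by auto
  qed
  show "lext n h (i,j)" unfolding lext_def using A B ij(1) by auto
next
  have mv: "mv_assignment n \<mu>" using lv locally_valid_def by auto
  have ij: "i \<in> {1,2}" "1 \<le> j" "j \<le> n" using f unfolding faces_def by auto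
  assume "lext n h (i,j)"
  then have "rep n (face_flip n (i,j) \<mu>) (fh h (i,j))" using flip_rep[OF r ij] by auto
  then have "locally_valid n (face_flip n (i,j) \<mu>)" using rep_lv mv_flip[OF mv] by auto
  then show "flippable n \<mu> (i,j)" unfolding flippable_def using lv f by auto
qed

lemma mu_eq:
  assumes "mv_assignment n \<mu>1" "mv_assignment n \<mu>2" "rep n \<mu>1 h1" "rep n \<mu>2 h2" "n \<ge> 1"
    and eq: "\<And>i j. i \<in> {1,2} \<Longrightarrow> 1 \<le> j \<Longrightarrow> j \<le> n \<Longrightarrow> h2 (i,j) = h1 (i,j) + c"
  shows "\<mu>1 = \<mu>2"
proof
  fix x
  show "\<mu>1 x = \<mu>2 x"
  proof (cases "x \<in> creases n")
    case False then show ?thesis using assms(1,2) unfolding mv_assignment_def by auto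
  next
    case True
    show ?thesis
    proof (cases "x = 0")
      case x0: True
      have "n \<ge> 1" using assms(5) .
      then show ?thesis using rep_facts(4)[OF assms(3), of 1] rep_facts(4)[OF assms(4), of 1] eq[of 1 1] eq[of 2 1] x0 by auto
    next
      case False
      define k where "k = (x+1) div 3"
      have k: "1 \<le> k" "k < n" "x = 3*k-1 \<or> x = 3*k \<or> x = 3*k+1" using True False unfolding creases_iff k_def by auto
      have "k+1 \<le> n" using k by auto
      then show ?thesis using k rep_facts(1-3)[OF assms(3) k(1,2)] rep_facts(1-3)[OF assms(4) k(1,2)]
        eq[of 1 k] eq[of 2 k] eq[of 1 "k+1"] eq[of 2 "k+1"] by auto
    qed
  qed
qed

lemma finV: "finite (dual_vertices n)" unfolding dual_vertices_def by simp

lemma sum_change: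
  fixes f g :: "'a \<Rightarrow> int"
  assumes "finite A" "v \<in> A" "\<And>x. x \<in> A \<Longrightarrow> x \<noteq> v \<Longrightarrow> f x = g x"
  shows "sum f A = sum g A + (f v - g v)"
proof -
  have "sum f A = f v + sum f (A - {v})" using assms by (simp add: sum.remove)
  moreover have "sum g A = g v + sum g (A - {v})" using assms by (simp add: sum.remove)
  moreover have "sum f (A - {v}) = sum g (A - {v})" using assms(3) by (intro sum.cong) auto
  ultimately show ?thesis by simp
qed

lemma low:
  assumes "(ofg_adj n ^^ k) \<mu>1 \<mu>2" "locally_valid n \<mu>1" "rep n \<mu>1 h1" "rep n \<mu>2 h2"
  shows "\<exists>c. even (h1(1,1) - h2(1,1) - c) \<and> (\<Sum>v\<in>dual_vertices n. \<bar>h1 v - h2 v - c\<bar>) \<le> 2 * int k"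
  using assms
proof (induction k arbitrary: \<mu>1 h1)
  case 0
  then have "\<mu>1 = \<mu>2" by auto
  then have e: "h1 v - h2 v - (h1(1,1) - h2(1,1)) = 0" if "v \<in> dual_vertices n" for v
    using rep_unique[OF "0.prems"(4), of h1 "fst v" "snd v"] "0.prems"(3) that unfolding dual_vertices_def
    by (cases v) auto
  show ?case
  proof (intro exI conjI)
    show "even (h1(1,1) - h2(1,1) - (h1(1,1) - h2(1,1)))" by simp
    have "(\<Sum>v\<in>dual_vertices n. \<bar>h1 v - h2 v - (h1(1,1) - h2(1,1))\<bar>) = 0"
    proof (rule sum.neutral, rule ballI)
      fix v assume "v \<in> dual_vertices n"
      from e[OF this] show "\<bar>h1 v - h2 v - (h1(1,1) - h2(1,1))\<bar> = 0" by simp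
    qed
    then show "(\<Sum>v\<in>dual_vertices n. \<bar>h1 v - h2 v - (h1(1,1) - h2(1,1))\<bar>) \<le> 2 * int 0" by simp
  qed
next
  case (Suc k)
  obtain \<mu>' where a: "ofg_adj n \<mu>1 \<mu>'" and p: "(ofg_adj n ^^ k) \<mu>' \<mu>2" using relpowp_Suc_D2[OF Suc.prems(1)] by auto
  obtain i j where fl: "flippable n \<mu>1 (i,j)" and m': "\<mu>' = face_flip n (i,j) \<mu>1" using a unfolding ofg_adj_def by auto
  have f: "(i,j) \<in> faces n" and lv': "locally_valid n \<mu>'" using fl m' unfolding flippable_def by auto
  have ij: "i \<in> {1,2}" "1 \<le> j" "j \<le> n" using f unfolding faces_def by auto
  have le: "lext n h1 (i,j)" using flippable_iff[OF Suc.prems(2,3) f] fl by auto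
  have r': "rep n \<mu>' (fh h1 (i,j))" using flip_rep[OF Suc.prems(3) ij le] m' by simp
  obtain c where c: "even (fh h1 (i,j) (1,1) - h2(1,1) - c)"
     "(\<Sum>v\<in>dual_vertices n. \<bar>fh h1 (i,j) v - h2 v - c\<bar>) \<le> 2 * int k"
    using Suc.IH[OF p lv' r' Suc.prems(4)] by auto
  have mv: "mv_assignment n \<mu>1" using Suc.prems(2) locally_valid_def by auto
  have ed: "\<bar>h1(2,j) - h1(1,j)\<bar> = 1" using rep_edges(3)[OF mv Suc.prems(3) ij(2,3)] .
  have d1: "\<bar>fh h1 (i,j) (i,j) - h1 (i,j)\<bar> \<le> 2" using ed ij(1) unfolding fh_def by auto
  have ev: "even (fh h1 (i,j) (1,1) - h1 (1,1))"
  proof (cases "(i,j) = (1,1)")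
    case True
    then have "fh h1 (i,j) (1,1) - h1 (1,1) = 2 * (h1(3-i,j) - h1(i,j))" unfolding fh_def by auto
    then show ?thesis by simp
  next
    case False
    then show ?thesis unfolding fh_def by auto
  qed
  have vin: "(i,j) \<in> dual_vertices n" using ij unfolding dual_vertices_def by auto
  have "(\<Sum>v\<in>dual_vertices n. \<bar>h1 v - h2 v - c\<bar>) = (\<Sum>v\<in>dual_vertices n. \<bar>fh h1 (i,j) v - h2 v - c\<bar>)
     + (\<bar>h1 (i,j) - h2 (i,j) - c\<bar> - \<bar>fh h1 (i,j) (i,j) - h2 (i,j) - c\<bar>)"
    by (rule sum_change[OF finV vin]) (simp add: fh_def)
  also have "\<dots> \<le> 2 * int k + 2" using c(2) d1 by linarith
  finally have "(\<Sum>v\<in>dual_vertices n. \<bar>h1 v - h2 v - c\<bar>) \<le> 2 * int (Suc k)" by simp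
  moreover have "even (h1(1,1) - h2(1,1) - c)"
  proof -
    have eq: "h1(1,1) - h2(1,1) - c = (fh h1 (i,j) (1,1) - h2(1,1) - c) - (fh h1 (i,j) (1,1) - h1 (1,1))" by simp
    show ?thesis unfolding eq using c(1) ev by (simp only: even_diff even_add) simp
  qed
  ultimately show ?case by blast
qed

lemma hedge: "mv_assignment n \<mu> \<Longrightarrow> rep n \<mu> h \<Longrightarrow> i \<in> {1,2} \<Longrightarrow> 1 \<le> k \<Longrightarrow> k < n \<Longrightarrow> \<bar>h(i,k+1) - h(i,k)\<bar> = 1"
  using rep_edges(1,2) by auto
lemma vedge: "mv_assignment n \<mu> \<Longrightarrow> rep n \<mu> h \<Longrightarrow> i \<in> {1,2} \<Longrightarrow> 1 \<le> j \<Longrightarrow> j \<le> n \<Longrightarrow> \<bar>h(3-i,j) - h(i,j)\<bar> = 1"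
  using rep_edges(3)[of n \<mu> h j] by auto

lemma desc:
  assumes mv1: "mv_assignment n \<mu>1" and r1: "rep n \<mu>1 h1" and mv2: "mv_assignment n \<mu>2" and r2: "rep n \<mu>2 h2"
    and ev: "\<forall>v\<in>dual_vertices n. even (h1 v - h2 v)" and ex: "\<exists>v\<in>dual_vertices n. h1 v > h2 v"
  shows "\<exists>i j. (i,j) \<in> faces n \<and> lext n h1 (i,j) \<and> h1 (i,j) \<ge> h2 (i,j) + 2 \<and> fh h1 (i,j) (i,j) = h1 (i,j) - 2"
proof -
  define V where "V = dual_vertices n"
  define D where "D = Max ((\<lambda>v. h1 v - h2 v) ` V)"
  define S where "S = {v\<in>V. h1 v - h2 v = D}"
  have fV: "finite V" unfolding V_def by (rule finV)
  have Vne: "V \<noteq> {}" using ex V_def by auto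
  have Dge: "\<And>w. w \<in> V \<Longrightarrow> h1 w - h2 w \<le> D" unfolding D_def using fV by auto
  have "D \<in> (\<lambda>v. h1 v - h2 v) ` V" unfolding D_def using fV Vne by (intro Max_in) auto
  then have Sne: "S \<noteq> {}" unfolding S_def by auto
  have fS: "finite S" unfolding S_def using fV by auto
  have "Max (h1 ` S) \<in> h1 ` S" using fS Sne by (intro Max_in) auto
  then obtain v where vS: "v \<in> S" and vmax: "h1 v = Max (h1 ` S)" by auto
  have vmax': "\<And>w. w \<in> S \<Longrightarrow> h1 w \<le> h1 v" unfolding vmax using fS by auto
  have vV: "v \<in> V" and dv: "h1 v - h2 v = D" using vS unfolding S_def by auto
  have Dpos: "D > 0" using ex Dge V_def by force
  have "even D" using ev vV dv V_def by force
  then have D2: "D \<ge> 2" using Dpos by presburger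
  have key: "h1 u = h1 v - 1" if "u \<in> V" "\<bar>h1 u - h1 v\<bar> = 1" "\<bar>h2 u - h2 v\<bar> = 1" for u
  proof (rule ccontr)
    assume "h1 u \<noteq> h1 v - 1"
    then have a: "h1 u = h1 v + 1" using that(2) by auto
    then have "h1 u - h2 u \<ge> D" using that(3) dv by auto
    then have "u \<in> S" using Dge[OF that(1)] that(1) unfolding S_def by auto
    then show False using vmax' a by fastforce
  qed
  obtain i j where v: "v = (i,j)" by (cases v)
  have ij: "i \<in> {1,2}" "1 \<le> j" "j \<le> n" using vV unfolding v V_def dual_vertices_def by auto
  have i': "3 - i \<in> {1,2}" using ij by auto
  have uV: "(i', j') \<in> V" if "i' \<in> {1,2}" "1 \<le> j'" "j' \<le> n" for i' j'
    using that unfolding V_def dual_vertices_def by auto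
  have vert: "h1 (3-i,j) = h1 (i,j) - 1"
    using key[of "(3-i,j)"] uV[OF i' ij(2,3)] vedge[OF mv1 r1 ij] vedge[OF mv2 r2 ij] v by (auto simp: abs_minus_commute)
  have right: "h1 (i,j+1) = h1 (i,j) - 1" if "j < n"
    using key[of "(i,j+1)"] uV[OF ij(1), of "j+1"] hedge[OF mv1 r1 ij(1,2) that] hedge[OF mv2 r2 ij(1,2) that] v that by auto
  have left: "h1 (i,j-1) = h1 (i,j) - 1" if "2 \<le> j"
  proof -
    have k: "1 \<le> j-1" "j - 1 < n" "j - 1 + 1 = j" using that ij by auto
    show ?thesis
      using key[of "(i,j-1)"] uV[OF ij(1) k(1)] hedge[OF mv1 r1 ij(1) k(1,2)] hedge[OF mv2 r2 ij(1) k(1,2)] v k ij(3)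
      by (auto simp: abs_minus_commute)
  qed
  have "lext n h1 (i,j)" unfolding lext_def using vert left right ij(1) by auto
  moreover have "(i,j) \<in> faces n" using ij unfolding faces_def by auto
  moreover have "h1 (i,j) \<ge> h2 (i,j) + 2" using dv D2 v by auto
  moreover have "fh h1 (i,j) (i,j) = h1 (i,j) - 2" unfolding fh_def using vert by simp
  ultimately show ?thesis by blast
qed
lemma flip_invol: "face_flip n \<alpha> (face_flip n \<alpha> \<mu>) = \<mu>"
  unfolding face_flip_def by (simp add: fun_eq_iff)

lemma adj_flip:
  assumes "locally_valid n \<mu>" "rep n \<mu> h" "(i,j) \<in> faces n" "lext n h (i,j)"
  shows "ofg_adj n \<mu> (face_flip n (i,j) \<mu>)" "ofg_adj n (face_flip n (i,j) \<mu>) \<mu>"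
    "locally_valid n (face_flip n (i,j) \<mu>)" "rep n (face_flip n (i,j) \<mu>) (fh h (i,j))"
proof -
  have fl: "flippable n \<mu> (i,j)" using flippable_iff[OF assms(1,2,3)] assms(4) by auto
  then show "ofg_adj n \<mu> (face_flip n (i,j) \<mu>)" unfolding ofg_adj_def by auto
  have lv: "locally_valid n (face_flip n (i,j) \<mu>)" using fl unfolding flippable_def by auto
  then show "locally_valid n (face_flip n (i,j) \<mu>)" .
  have "flippable n (face_flip n (i,j) \<mu>) (i,j)" unfolding flippable_def flip_invol using lv assms(1,3) by auto
  then show "ofg_adj n (face_flip n (i,j) \<mu>) \<mu>" unfolding ofg_adj_def using flip_invol by metis
  have ij: "i \<in> {1,2}" "1 \<le> j" "j \<le> n" using assms(3) unfolding faces_def by auto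
  show "rep n (face_flip n (i,j) \<mu>) (fh h (i,j))" using flip_rep[OF assms(2) ij assms(4)] .
qed

lemma up:
  assumes "n \<ge> 1"
  shows "locally_valid n \<mu>1 \<Longrightarrow> locally_valid n \<mu>2 \<Longrightarrow> rep n \<mu>1 h1 \<Longrightarrow> rep n \<mu>2 h2 \<Longrightarrow>
    (\<forall>v\<in>dual_vertices n. even (h1 v - h2 v)) \<Longrightarrow> (\<Sum>v\<in>dual_vertices n. \<bar>h1 v - h2 v\<bar>) = 2 * int N \<Longrightarrow>
    (ofg_adj n ^^ N) \<mu>1 \<mu>2"
proof (induction N arbitrary: \<mu>1 \<mu>2 h1 h2)
  case 0
  have mv: "mv_assignment n \<mu>1" "mv_assignment n \<mu>2" using "0.prems"(1,2) locally_valid_def by auto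
  have "\<forall>v\<in>dual_vertices n. \<bar>h1 v - h2 v\<bar> = 0" using "0.prems"(6) finV
    by (subst sum_nonneg_eq_0_iff[symmetric]) auto
  then have "h2 (i,j) = h1 (i,j) + 0" if "i \<in> {1,2}" "1 \<le> j" "j \<le> n" for i j
    using that unfolding dual_vertices_def by auto
  then have "\<mu>1 = \<mu>2" using mu_eq[OF mv "0.prems"(3,4) assms] by blast
  then show ?case by simp
next
  case (Suc N)
  have mv: "mv_assignment n \<mu>1" "mv_assignment n \<mu>2" using Suc.prems(1,2) locally_valid_def by auto
  have "\<exists>v\<in>dual_vertices n. h1 v \<noteq> h2 v"
  proof (rule ccontr)
    assume "\<not> ?thesis"
    then have "(\<Sum>v\<in>dual_vertices n. \<bar>h1 v - h2 v\<bar>) = 0" by (intro sum.neutral) auto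
    then show False using Suc.prems(6) by simp
  qed
  then consider (A) "\<exists>v\<in>dual_vertices n. h1 v > h2 v" | (B) "\<exists>v\<in>dual_vertices n. h2 v > h1 v"
    by force
  then show ?case
  proof cases
    case A
    obtain i j where f: "(i,j) \<in> faces n" and le: "lext n h1 (i,j)" and g: "h1 (i,j) \<ge> h2 (i,j) + 2"
      and fv: "fh h1 (i,j) (i,j) = h1 (i,j) - 2"
      using desc[OF mv(1) Suc.prems(3) mv(2) Suc.prems(4,5) A] by blast
    note a = adj_flip[OF Suc.prems(1,3) f le]
    have vin: "(i,j) \<in> dual_vertices n" using f unfolding faces_def dual_vertices_def by auto
    have ev: "\<forall>v\<in>dual_vertices n. even (fh h1 (i,j) v - h2 v)"
    proof
      fix v assume "v \<in> dual_vertices n"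
      then show "even (fh h1 (i,j) v - h2 v)"
      proof (cases "v = (i,j)")
        case True
        have "fh h1 (i,j) v - h2 v = (h1 (i,j) - h2 (i,j)) - 2" using True fv by simp
        then show ?thesis using Suc.prems(5) vin by simp
      qed (use Suc.prems(5) in \<open>auto simp: fh_def\<close>)
    qed
    have "(\<Sum>v\<in>dual_vertices n. \<bar>h1 v - h2 v\<bar>) = (\<Sum>v\<in>dual_vertices n. \<bar>fh h1 (i,j) v - h2 v\<bar>)
       + (\<bar>h1 (i,j) - h2 (i,j)\<bar> - \<bar>fh h1 (i,j) (i,j) - h2 (i,j)\<bar>)"
      by (rule sum_change[OF finV vin]) (simp add: fh_def)
    then have "(\<Sum>v\<in>dual_vertices n. \<bar>fh h1 (i,j) v - h2 v\<bar>) = 2 * int N"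
      using Suc.prems(6) fv g by simp
    then have "(ofg_adj n ^^ N) (face_flip n (i,j) \<mu>1) \<mu>2"
      using Suc.IH[OF a(3) Suc.prems(2) a(4) Suc.prems(4) ev] by simp
    then show ?thesis using a(1) relpowp_Suc_I2 by metis
  next
    case B
    have ev0: "\<forall>v\<in>dual_vertices n. even (h2 v - h1 v)" using Suc.prems(5)
      by (metis even_minus minus_diff_eq)
    obtain i j where f: "(i,j) \<in> faces n" and le: "lext n h2 (i,j)" and g: "h2 (i,j) \<ge> h1 (i,j) + 2"
      and fv: "fh h2 (i,j) (i,j) = h2 (i,j) - 2"
      using desc[OF mv(2) Suc.prems(4) mv(1) Suc.prems(3) ev0 B] by blast
    note a = adj_flip[OF Suc.prems(2,4) f le]
    have vin: "(i,j) \<in> dual_vertices n" using f unfolding faces_def dual_vertices_def by auto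
    have ev: "\<forall>v\<in>dual_vertices n. even (h1 v - fh h2 (i,j) v)"
    proof
      fix v assume "v \<in> dual_vertices n"
      then show "even (h1 v - fh h2 (i,j) v)"
      proof (cases "v = (i,j)")
        case True
        have "h1 v - fh h2 (i,j) v = (h1 (i,j) - h2 (i,j)) + 2" using True fv by simp
        then show ?thesis using Suc.prems(5) vin by simp
      qed (use Suc.prems(5) in \<open>auto simp: fh_def\<close>)
    qed
    have "(\<Sum>v\<in>dual_vertices n. \<bar>h1 v - h2 v\<bar>) = (\<Sum>v\<in>dual_vertices n. \<bar>h1 v - fh h2 (i,j) v\<bar>)
       + (\<bar>h1 (i,j) - h2 (i,j)\<bar> - \<bar>h1 (i,j) - fh h2 (i,j) (i,j)\<bar>)"
      by (rule sum_change[OF finV vin]) (simp add: fh_def)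
    then have "(\<Sum>v\<in>dual_vertices n. \<bar>h1 v - fh h2 (i,j) v\<bar>) = 2 * int N"
      using Suc.prems(6) fv g by simp
    then have "(ofg_adj n ^^ N) \<mu>1 (face_flip n (i,j) \<mu>2)"
      using Suc.IH[OF Suc.prems(1) a(3) Suc.prems(3) a(4) ev] by simp
    then show ?thesis using a(2) relpowp_Suc_I by metis
  qed
qed
definition Cn :: "nat \<Rightarrow> int" where "Cn n = int ((n^2 + 1) div 2)"

lemma ceil_Cn: "\<lceil>real (n^2) / 2\<rceil> = Cn n"
proof (cases "even n")
  case True
  then obtain k where k: "n = 2*k" by auto
  have "real (n^2) / 2 = real (2*k^2)" unfolding k by (simp add: power2_eq_square)
  moreover have "Cn n = int (2*k^2)" unfolding Cn_def k by (simp add: power2_eq_square)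
  ultimately show ?thesis by (metis ceiling_of_nat)
next
  case False
  then obtain k where k: "n = 2*k+1" using oddE by blast
  have "real (n^2) / 2 = real (2*k^2+2*k) + 1/2" unfolding k by (simp add: power2_eq_square algebra_simps)
  moreover have "Cn n = int (2*k^2+2*k) + 1" unfolding Cn_def k by (simp add: power2_eq_square algebra_simps)
  ultimately show ?thesis by (simp add: ceiling_unique)
qed

lemma sumV: "(\<Sum>v\<in>dual_vertices n. g v) = (\<Sum>j\<in>{1..n}. g (1,j) + g (2,j))"
proof -
  have "(\<Sum>i\<in>{1,2}. \<Sum>j\<in>{1..n}. g (i,j)) = (\<Sum>(i,j)\<in>{1,2}\<times>{1..n}. g (i,j))"
    by (rule sum.cartesian_product)
  also have "\<dots> = (\<Sum>v\<in>dual_vertices n. g v)" unfolding dual_vertices_def by (simp add: case_prod_beta')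
  finally show ?thesis by (simp add: sum.distrib)
qed

lemma col_id: "\<bar>a - b\<bar> \<le> 1 \<Longrightarrow> \<bar>a - m\<bar> + \<bar>b - m\<bar> = \<bar>a + b - 2*m\<bar>" for a b m :: int
  by arith

lemma pairb: "\<bar>a - b\<bar> \<le> R \<Longrightarrow> \<bar>2*x - a - b\<bar> \<le> R \<Longrightarrow> \<bar>a - x\<bar> + \<bar>b - x\<bar> \<le> R" for a b x R :: int
  by arith

lemma sum_split: "(\<Sum>j\<in>{1..a+b}. f j) = (\<Sum>j\<in>{1..a}. f j) + (\<Sum>j\<in>{1..b}. f (j+a))" for f :: "nat \<Rightarrow> int"
proof (induction b)
  case 0 then show ?case by simp
next
  case (Suc b)
  have "(\<Sum>j\<in>{1..a+Suc b}. f j) = (\<Sum>j\<in>{1..a+b}. f j) + f (a + Suc b)" by simp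
  moreover have "(\<Sum>j\<in>{1..Suc b}. f (j+a)) = (\<Sum>j\<in>{1..b}. f (j+a)) + f (Suc b + a)" by simp
  ultimately show ?case using Suc by (simp add: add.commute)
qed

lemma lip:
  assumes "\<And>j. 1 \<le> j \<Longrightarrow> j < n \<Longrightarrow> \<bar>s (j+1) - s j\<bar> \<le> (2::int)"
    and j: "1 \<le> j" "j \<le> l" "l \<le> n"
  shows "\<bar>s l - s j\<bar> \<le> 2 * int (l - j)"
proof -
  have "\<bar>s (j+d) - s j\<bar> \<le> 2 * int d" if "j + d \<le> n" for d
    using that
  proof (induction d)
    case 0 then show ?case by simp
  next
    case (Suc d)
    have "\<bar>s (j+d+1) - s (j+d)\<bar> \<le> 2" using assms(1)[of "j+d"] Suc.prems j(1) by auto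
    moreover have "\<bar>s (j+d) - s j\<bar> \<le> 2 * int d" using Suc by auto
    ultimately show ?case by simp
  qed
  from this[of "l - j"] show ?thesis using j by simp
qed

lemma lb:
  assumes "odd t"
  shows "(\<Sum>j<n. \<bar>2 * int j + t\<bar>) \<ge> Cn n"
  using assms
proof (induction n arbitrary: t rule: less_induct)
  case (less n)
  consider "n = 0" | "n = 1" | m where "n = m + 2" by (metis One_nat_def add_2_eq_Suc' not0_implies_Suc)
  then show ?case
  proof cases
    case 1 then show ?thesis by (simp add: Cn_def)
  next
    case 2
    have "t \<noteq> 0" using less.prems by auto
    then show ?thesis using 2 by (simp add: Cn_def)
  next
    case 3
    have "(\<Sum>j<n. \<bar>2 * int j + t\<bar>) = \<bar>t\<bar> + (\<Sum>j<m+1. \<bar>2 * int (Suc j) + t\<bar>)"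
    proof -
      have "m + 2 = Suc (m+1)" by simp
      then show ?thesis unfolding 3 by (simp only: sum.lessThan_Suc_shift)
    qed
    also have "\<dots> = \<bar>t\<bar> + (\<Sum>j<m. \<bar>2 * int (Suc j) + t\<bar>) + \<bar>2 * int (Suc m) + t\<bar>" by simp
    also have "(\<Sum>j<m. \<bar>2 * int (Suc j) + t\<bar>) = (\<Sum>j<m. \<bar>2 * int j + (t+2)\<bar>)" by (simp add: algebra_simps)
    finally have e: "(\<Sum>j<n. \<bar>2 * int j + t\<bar>) = \<bar>t\<bar> + (\<Sum>j<m. \<bar>2 * int j + (t+2)\<bar>) + \<bar>2 * int (Suc m) + t\<bar>" .
    have ih: "(\<Sum>j<m. \<bar>2 * int j + (t+2)\<bar>) \<ge> Cn m" using less.IH[of m "t+2"] 3 less.prems by auto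
    have c: "Cn n = Cn m + 2 * int m + 2" unfolding 3 Cn_def by (simp add: power2_eq_square algebra_simps)
    have "\<bar>t\<bar> + \<bar>2 * int (Suc m) + t\<bar> \<ge> 2 * int m + 2" by simp
    then show ?thesis using e ih c by linarith
  qed
qed
lemma c4: "x \<le> 4 * ((x + 3) div 4)" "4 * ((x+3) div 4) \<le> x + 3" for x :: int
  by presburger+
lemma c4e: "x \<le> 2*y \<Longrightarrow> 4*((x+3) div 4) \<le> 2*y + 2" for x y :: int
  by presburger
lemma c4f: "4*((2*y - 2 + 3) div 4) \<le> 2*y" for y :: int
  by presburger

lemma Cn_even: "Cn (k+k) = 2 * int k * int k"
proof -
  have "(k+k)^2 + 1 = 2*(2*k*k) + 1" by (simp add: power2_eq_square algebra_simps)
  then have "((k+k)^2 + 1) div 2 = 2*k*k" by simp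
  then show ?thesis unfolding Cn_def by simp
qed
lemma Cn_odd: "Cn (k+1+k) = 2 * int k * int k + 2 * int k + 1"
proof -
  have "(k+1+k)^2 + 1 = 2*(2*k*k + 2*k + 1)" by (simp add: power2_eq_square algebra_simps)
  then have "((k+1+k)^2 + 1) div 2 = 2*k*k + 2*k + 1" by simp
  then show ?thesis unfolding Cn_def by simp
qed

lemma abs_sum_le: "\<bar>a\<bar> \<le> x \<Longrightarrow> \<bar>b\<bar> \<le> y \<Longrightarrow> \<bar>a + b\<bar> \<le> x + y" for a b x y :: int
  by linarith
lemma abs_le_D: "\<bar>a\<bar> \<le> x \<Longrightarrow> a \<le> x \<and> -a \<le> x" for a x :: int
  by linarith

lemma ub1d:
  assumes L: "\<And>j. 1 \<le> j \<Longrightarrow> j < n \<Longrightarrow> \<bar>s (j+1) - s j\<bar> \<le> (2::int)" and n2: "n \<ge> 2"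
  shows "\<exists>m. (\<Sum>j\<in>{1..n}. \<bar>s j - 2*m\<bar>) \<le> Cn n"
proof -
  have D: "\<bar>s l - s j\<bar> \<le> 2 * int d" if "1 \<le> j" "j \<le> n" "1 \<le> l" "l \<le> n" "int d = \<bar>int l - int j\<bar>" for j l d
  proof (cases "j \<le> l")
    case True
    then have "d = l - j" using that(5) by auto
    then show ?thesis using lip[where n=n and s=s, OF L, of j l] that True by auto
  next
    case False
    then have "d = j - l" using that(5) by auto
    then show ?thesis using lip[where n=n and s=s, OF L, of l j] that False by (auto simp: abs_minus_commute)
  qed
  show ?thesis
  proof (cases "even n")
    case True
    then obtain k where k: "n = k + k" by (metis evenE mult_2)
    have k1: "k \<ge> 1" using n2 k by auto
    define u where "u j = s j + s (j+k)" for j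
    define M where "M = Max (u ` {1..k})"
    define L0 where "L0 = Min (u ` {1..k})"
    have Mge: "u j \<le> M" "L0 \<le> u j" if "j \<in> {1..k}" for j unfolding M_def L0_def using that by auto
    have "M \<in> u ` {1..k}" unfolding M_def using k1 by (intro Max_in) auto
    then obtain p where p: "p \<in> {1..k}" "u p = M" by auto
    have "L0 \<in> u ` {1..k}" unfolding L0_def using k1 by (intro Min_in) auto
    then obtain q where q: "q \<in> {1..k}" "u q = L0" by auto
    obtain d where d: "int d = \<bar>int p - int q\<bar>" by (metis abs_ge_zero nonneg_int_cases)
    have dk: "int d \<le> int k - 1" using p q d by auto
    have "\<bar>s p - s q\<bar> \<le> 2 * int d" using D[of q p d] p q k d by auto
    moreover have "\<bar>s (p+k) - s (q+k)\<bar> \<le> 2 * int d" using D[of "q+k" "p+k" d] p q k d by auto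
    ultimately have "\<bar>(s p - s q) + (s (p+k) - s (q+k))\<bar> \<le> 2 * int d + 2 * int d" by (rule abs_sum_le)
    then have rng: "M - L0 \<le> 4 * int k - 4" using p(2) q(2) dk unfolding u_def by linarith
    define m where "m = (M - 2 * int k + 3) div 4"
    have m1: "M - 2 * int k \<le> 4*m" "4*m \<le> M - 2 * int k + 3" unfolding m_def using c4[of "M - 2 * int k"] by auto
    have pair: "\<bar>s j - 2*m\<bar> + \<bar>s (j+k) - 2*m\<bar> \<le> 2 * int k" if "j \<in> {1..k}" for j
    proof (rule pairb)
      show "\<bar>s j - s (j+k)\<bar> \<le> 2 * int k" using D[of "j+k" j k] that k by (auto simp: abs_minus_commute)
      show "\<bar>2 * (2 * m) - s j - s (j + k)\<bar> \<le> 2 * int k"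
        unfolding abs_le_iff using Mge[OF that] m1 rng u_def[of j] by linarith
    qed
    have "(\<Sum>j\<in>{1..n}. \<bar>s j - 2*m\<bar>) = (\<Sum>j\<in>{1..k}. \<bar>s j - 2*m\<bar>) + (\<Sum>j\<in>{1..k}. \<bar>s (j+k) - 2*m\<bar>)"
      unfolding k by (rule sum_split)
    also have "\<dots> = (\<Sum>j\<in>{1..k}. \<bar>s j - 2*m\<bar> + \<bar>s (j+k) - 2*m\<bar>)" by (simp add: sum.distrib)
    also have "\<dots> \<le> (\<Sum>j\<in>{1..k}. 2 * int k)" by (rule sum_mono) (use pair in auto)
    also have "\<dots> = Cn n" unfolding k Cn_even Cn_odd by (simp add: algebra_simps)
    finally show ?thesis by blast
  next
    case False
    then obtain k where k: "n = (k + 1) + k" by (metis oddE add.commute add.left_commute mult_2)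
    have k1: "k \<ge> 1" using n2 k by auto
    define u where "u j = s j + s (j+(k+1))" for j
    define M where "M = Max (u ` {1..k})"
    define L0 where "L0 = Min (u ` {1..k})"
    define sc where "sc = s (k+1)"
    have Mge: "u j \<le> M" "L0 \<le> u j" if "j \<in> {1..k}" for j unfolding M_def L0_def using that by auto
    have "M \<in> u ` {1..k}" unfolding M_def using k1 by (intro Max_in) auto
    then obtain p where p: "p \<in> {1..k}" "u p = M" by auto
    have "L0 \<in> u ` {1..k}" unfolding L0_def using k1 by (intro Min_in) auto
    then obtain q where q: "q \<in> {1..k}" "u q = L0" by auto
    obtain d where d: "int d = \<bar>int p - int q\<bar>" by (metis abs_ge_zero nonneg_int_cases)
    have dk: "int d \<le> int k - 1" using p q d by auto
    have "\<bar>s p - s q\<bar> \<le> 2 * int d" using D[of q p d] p q k d by auto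
    moreover have "\<bar>s (p+(k+1)) - s (q+(k+1))\<bar> \<le> 2 * int d" using D[of "q+(k+1)" "p+(k+1)" d] p q k d by auto
    ultimately have "\<bar>(s p - s q) + (s (p+(k+1)) - s (q+(k+1)))\<bar> \<le> 2 * int d + 2 * int d" by (rule abs_sum_le)
    then have rng: "M - L0 \<le> 4 * int k - 4" using p(2) q(2) dk unfolding u_def by linarith
    have uc: "\<bar>u j - 2 * sc\<bar> \<le> 2 * int k + 2" if "j \<in> {1..k}" for j
    proof -
      have "\<bar>s j - s (k+1)\<bar> \<le> 2 * int (k + 1 - j)" using D[of "k+1" j "k+1-j"] that k by auto
      moreover have "\<bar>s (j+(k+1)) - s (k+1)\<bar> \<le> 2 * int j" using D[of "k+1" "j+(k+1)" j] that k by auto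
      ultimately have "\<bar>(s j - s (k+1)) + (s (j+(k+1)) - s (k+1))\<bar> \<le> 2 * int (k + 1 - j) + 2 * int j" by (rule abs_sum_le)
      moreover have "int (k + 1 - j) = int k + 1 - int j" using that by auto
      ultimately show ?thesis unfolding u_def sc_def by (simp add: algebra_simps)
    qed
    define lo where "lo = max (M - 2 * int k - 2) (2 * sc - 2)"
    define m where "m = (lo + 3) div 4"
    have lo2: "lo \<le> 2 * sc" unfolding lo_def using abs_le_D[OF uc[OF p(1)]] p(2) by auto
    have m1: "lo \<le> 4*m" "4*m \<le> lo + 3" unfolding m_def using c4[of lo] by auto
    have m2: "4*m \<le> 2*sc + 2" unfolding m_def using c4e[OF lo2] .
    have m3: "4*m \<le> 2*sc" if "lo = 2*sc - 2" unfolding m_def that using c4f .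
    have lo3: "M - 2 * int k - 2 \<le> lo" "2 * sc - 2 \<le> lo" unfolding lo_def by auto
    have cen: "\<bar>s (k+1) - 2*m\<bar> \<le> 1" unfolding abs_le_iff using m1 m2 lo3 sc_def by linarith
    have pair: "\<bar>s j - 2*m\<bar> + \<bar>s (j+(k+1)) - 2*m\<bar> \<le> 2 * int k + 2" if "j \<in> {1..k}" for j
    proof (rule pairb)
      show "\<bar>s j - s (j+(k+1))\<bar> \<le> 2 * int k + 2" using D[of "j+(k+1)" j "k+1"] that k by (auto simp: abs_minus_commute)
      have "4*m - u j \<le> 2 * int k + 2"
      proof (cases "lo = 2*sc - 2")
        case True then show ?thesis using m3 abs_le_D[OF uc[OF that]] by linarith
      next
        case False
        then have "lo = M - 2 * int k - 2" unfolding lo_def by auto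
        then show ?thesis using m1 rng Mge[OF that] by linarith
      qed
      moreover have "u j - 4*m \<le> 2 * int k + 2" using m1 lo3 Mge[OF that] by linarith
      ultimately show "\<bar>2 * (2 * m) - s j - s (j + (k+1))\<bar> \<le> 2 * int k + 2" unfolding abs_le_iff u_def by linarith
    qed
    have "(\<Sum>j\<in>{1..n}. \<bar>s j - 2*m\<bar>) = (\<Sum>j\<in>{1..k+1}. \<bar>s j - 2*m\<bar>) + (\<Sum>j\<in>{1..k}. \<bar>s (j+(k+1)) - 2*m\<bar>)"
      unfolding k by (rule sum_split)
    also have "(\<Sum>j\<in>{1..k+1}. \<bar>s j - 2*m\<bar>) = (\<Sum>j\<in>{1..k}. \<bar>s j - 2*m\<bar>) + \<bar>s (k+1) - 2*m\<bar>" by simp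
    finally have "(\<Sum>j\<in>{1..n}. \<bar>s j - 2*m\<bar>) = (\<Sum>j\<in>{1..k}. \<bar>s j - 2*m\<bar> + \<bar>s (j+(k+1)) - 2*m\<bar>) + \<bar>s (k+1) - 2*m\<bar>"
      by (simp add: sum.distrib)
    also have "\<dots> \<le> (\<Sum>j\<in>{1..k}. 2 * int k + 2) + 1"
    proof (rule add_mono)
      show "(\<Sum>j\<in>{1..k}. \<bar>s j - 2*m\<bar> + \<bar>s (j+(k+1)) - 2*m\<bar>) \<le> (\<Sum>j\<in>{1..k}. 2 * int k + 2)"
        by (rule sum_mono) (use pair in auto)
    qed (use cen in auto)
    also have "\<dots> = Cn n" unfolding k Cn_even Cn_odd by (simp add: algebra_simps)
    finally show ?thesis by blast
  qed
qed
lemma par: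
  assumes mv: "mv_assignment n \<mu>" and r: "rep n \<mu> h" and i: "i \<in> {1,2}" and j: "1 \<le> j" "j \<le> n"
  shows "even (h(i,j) - h(1,1) + int i + int j)"
proof -
  have r1: "even (h(1,j) - h(1,1) + 1 + int j)" if "1 \<le> j" "j \<le> n" for j
    using that
  proof (induction j rule: nat_induct_at_least)
    case base then show ?case by simp
  next
    case (Suc m)
    have "\<bar>h(1,m+1) - h(1,m)\<bar> = 1" using rep_edges(1)[OF mv r, of m] Suc by auto
    then have "h(1,Suc m) = h(1,m) + 1 \<or> h(1,Suc m) = h(1,m) - 1" by auto
    then show ?case using Suc by auto
  qed
  have "\<bar>h(2,j) - h(1,j)\<bar> = 1" using rep_edges(3)[OF mv r j] .
  then have "h(2,j) = h(1,j) + 1 \<or> h(2,j) = h(1,j) - 1" by auto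
  then show ?thesis using r1[OF j] i by auto
qed

lemma par2:
  assumes "mv_assignment n \<mu>1" "rep n \<mu>1 h1" "mv_assignment n \<mu>2" "rep n \<mu>2 h2"
    and "even (h1(1,1) - h2(1,1))" and "v \<in> dual_vertices n"
  shows "even (h1 v - h2 v)"
proof -
  obtain i j where v: "v = (i,j)" "i \<in> {1,2}" "1 \<le> j" "j \<le> n" using assms(6) unfolding dual_vertices_def by auto
  have E1: "even (h1(i,j) - h1(1,1) + int i + int j)" and E2: "even (h2(i,j) - h2(1,1) + int i + int j)"
    using par[OF assms(1,2) v(2-4)] par[OF assms(3,4) v(2-4)] by auto
  have "even ((h1(i,j) - h1(1,1) + int i + int j) - (h2(i,j) - h2(1,1) + int i + int j) + (h1(1,1) - h2(1,1)))"
    by (rule dvd_add[OF dvd_diff[OF E1 E2] assms(5)])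
  moreover have "(h1(i,j) - h1(1,1) + int i + int j) - (h2(i,j) - h2(1,1) + int i + int j) + (h1(1,1) - h2(1,1)) = h1 v - h2 v"
    using v by simp
  ultimately show ?thesis by metis
qed

lemma core2:
  assumes n2: "n \<ge> 2" and mv: "mv_assignment n \<mu>1" "mv_assignment n \<mu>2" and r: "rep n \<mu>1 h1" "rep n \<mu>2 h2"
    and ev: "even (h1(1,1) - h2(1,1))"
  shows "\<exists>m. (\<Sum>v\<in>dual_vertices n. \<bar>h1 v - h2 v - 2*m\<bar>) \<le> 2 * Cn n"
proof -
  define d where "d v = (h1 v - h2 v) div 2" for v
  have dd: "h1 v - h2 v = 2 * d v" if "v \<in> dual_vertices n" for v
    using par2[OF mv(1) r(1) mv(2) r(2) ev that] unfolding d_def by auto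
  have V: "(i,j) \<in> dual_vertices n" if "i \<in> {1,2}" "1 \<le> j" "j \<le> n" for i j
    using that unfolding dual_vertices_def by auto
  have hl: "\<bar>d(i,j+1) - d(i,j)\<bar> \<le> 1" if "i \<in> {1,2}" "1 \<le> j" "j < n" for i j
  proof -
    have "\<bar>h1(i,j+1) - h1(i,j)\<bar> = 1" "\<bar>h2(i,j+1) - h2(i,j)\<bar> = 1"
      using hedge[OF mv(1) r(1) that] hedge[OF mv(2) r(2) that] by auto
    moreover have "h1(i,j+1) - h2(i,j+1) = 2 * d(i,j+1)" "h1(i,j) - h2(i,j) = 2 * d(i,j)"
      using dd V that by auto
    ultimately show ?thesis by arith
  qed
  have vl: "\<bar>d(1,j) - d(2,j)\<bar> \<le> 1" if "1 \<le> j" "j \<le> n" for j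
  proof -
    have "\<bar>h1(2,j) - h1(1,j)\<bar> = 1" "\<bar>h2(2,j) - h2(1,j)\<bar> = 1"
      using rep_edges(3)[OF mv(1) r(1) that] rep_edges(3)[OF mv(2) r(2) that] by auto
    moreover have "h1(1,j) - h2(1,j) = 2 * d(1,j)" "h1(2,j) - h2(2,j) = 2 * d(2,j)"
      using dd V that by auto
    ultimately show ?thesis by arith
  qed
  define s where "s j = d(1,j) + d(2,j)" for j
  have sl: "\<bar>s (j+1) - s j\<bar> \<le> 2" if "1 \<le> j" "j < n" for j
  proof -
    have "\<bar>d(1,j+1) - d(1,j)\<bar> \<le> 1" "\<bar>d(2,j+1) - d(2,j)\<bar> \<le> 1" using hl that by auto
    then have "\<bar>(d(1,j+1) - d(1,j)) + (d(2,j+1) - d(2,j))\<bar> \<le> 1 + 1" by (rule abs_sum_le)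
    then show ?thesis unfolding s_def by (simp add: algebra_simps)
  qed
  obtain m where m: "(\<Sum>j\<in>{1..n}. \<bar>s j - 2*m\<bar>) \<le> Cn n" using ub1d[of n s, OF sl n2] by auto
  have "(\<Sum>v\<in>dual_vertices n. \<bar>h1 v - h2 v - 2*m\<bar>) = (\<Sum>v\<in>dual_vertices n. 2 * \<bar>d v - m\<bar>)"
  proof (rule sum.cong)
    fix v assume "v \<in> dual_vertices n"
    then have e: "h1 v - h2 v - 2*m = 2*(d v - m)" using dd by simp
    show "\<bar>h1 v - h2 v - 2*m\<bar> = 2 * \<bar>d v - m\<bar>" unfolding e abs_mult by simp
  qed simp
  also have "\<dots> = (\<Sum>j\<in>{1..n}. 2 * \<bar>d(1,j) - m\<bar> + 2 * \<bar>d(2,j) - m\<bar>)" by (rule sumV)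
  also have "\<dots> = 2 * (\<Sum>j\<in>{1..n}. \<bar>s j - 2*m\<bar>)"
    unfolding sum_distrib_left
  proof (rule sum.cong)
    fix j assume "j \<in> {1..n}"
    then show "2 * \<bar>d(1,j) - m\<bar> + 2 * \<bar>d(2,j) - m\<bar> = 2 * \<bar>s j - 2*m\<bar>"
      using col_id[OF vl, of j m] unfolding s_def by auto
  qed simp
  finally have "(\<Sum>v\<in>dual_vertices n. \<bar>h1 v - h2 v - 2*m\<bar>) \<le> 2 * Cn n" using m by linarith
  then show ?thesis by blast
qed

lemma rep_shift: "rep n \<mu> h \<Longrightarrow> rep n \<mu> (\<lambda>v. h v + c)"
  unfolding rep_def by auto

lemma dist_le:
  assumes n2: "n \<ge> 2" and lv: "locally_valid n \<mu>1" "locally_valid n \<mu>2"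
  shows "\<exists>N. int N \<le> Cn n \<and> (ofg_adj n ^^ N) \<mu>1 \<mu>2"
proof -
  have mv: "mv_assignment n \<mu>1" "mv_assignment n \<mu>2" using lv locally_valid_def by auto
  note r1 = rep_hgt[OF lv(1)] and r2 = rep_hgt[OF lv(2)]
  obtain m where m: "(\<Sum>v\<in>dual_vertices n. \<bar>hgt \<mu>1 v - hgt \<mu>2 v - 2*m\<bar>) \<le> 2 * Cn n"
    using core2[OF n2 mv r1(1) r2(1)] r1(2) r2(2) by auto
  define h2 where "h2 v = hgt \<mu>2 v + 2*m" for v
  have r2': "rep n \<mu>2 h2" unfolding h2_def using rep_shift[OF r2(1)] .
  have ev11: "even (hgt \<mu>1 (1,1) - h2 (1,1))" unfolding h2_def using r1(2) r2(2) by simp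
  have ev: "\<forall>v\<in>dual_vertices n. even (hgt \<mu>1 v - h2 v)" using par2[OF mv(1) r1(1) mv(2) r2' ev11] by auto
  define S where "S = (\<Sum>v\<in>dual_vertices n. \<bar>hgt \<mu>1 v - h2 v\<bar>)"
  have "even S" unfolding S_def by (rule dvd_sum) (use ev in auto)
  then obtain N0 where N0: "S = 2 * N0" by auto
  have "N0 \<ge> 0" using N0 unfolding S_def by (smt (verit) sum_nonneg abs_ge_zero)
  then obtain N where N: "S = 2 * int N" using N0 by (metis nonneg_int_cases)
  have "S \<le> 2 * Cn n" using m unfolding S_def h2_def by (simp add: algebra_simps)
  then have "int N \<le> Cn n" using N by simp
  moreover have "(ofg_adj n ^^ N) \<mu>1 \<mu>2"
    using up[of n \<mu>1 \<mu>2 "hgt \<mu>1" h2 N] n2 lv r1(1) r2' ev N unfolding S_def by auto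
  ultimately show ?thesis by blast
qed

lemma walk_snoc: "walk_weight g (xs @ [y]) = walk_weight g xs + (if xs = [] then 0 else edge_weight g (last xs) y)"
proof (induction xs)
  case Nil then show ?case by simp
next
  case (Cons x xs)
  then show ?case by (cases xs) auto
qed

lemma ew: "\<bar>h b - h a\<bar> = 1 \<Longrightarrow> edge_weight (\<lambda>v. h v mod 3) a b = h b - h a"
proof -
  assume a: "\<bar>h b - h a\<bar> = 1"
  have e: "(h b mod 3 - h a mod 3) mod 3 = (h b - h a) mod 3" by (simp add: mod_diff_eq)
  show ?thesis
  proof (cases "h b - h a = 1")
    case True then show ?thesis unfolding edge_weight_def e by simp
  next
    case False
    then have "h b - h a = -1" using a by auto
    then show ?thesis unfolding edge_weight_def e by simp
  qed
qed

lemma walk_path: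
  assumes mv: "mv_assignment n \<mu>" and r: "rep n \<mu> h" and v: "v \<in> dual_vertices n"
  shows "walk_weight (\<lambda>v. h v mod 3) (path_from_v11 v) = h v - h(1,1)"
proof -
  let ?g = "\<lambda>v. h v mod 3"
  have row: "walk_weight ?g (map (\<lambda>k. (1::nat, k)) [1..<j+1]) = h(1,j) - h(1,1)" if "1 \<le> j" "j \<le> n" for j
    using that
  proof (induction j rule: nat_induct_at_least)
    case base then show ?case by simp
  next
    case (Suc j)
    have u: "[1..<Suc j + 1] = [1..<j+1] @ [j+1]" by simp
    have l: "last (map (\<lambda>k. (1::nat, k)) [1..<j+1]) = (1,j)" using Suc by (simp add: last_map)
    have "\<bar>h(1,j+1) - h(1,j)\<bar> = 1" using rep_edges(1)[OF mv r, of j] Suc by auto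
    then have "edge_weight ?g (1,j) (1,j+1) = h(1,j+1) - h(1,j)" by (rule ew)
    moreover have ne: "map (\<lambda>k. (1::nat, k)) [1..<j+1] \<noteq> []" using Suc by simp
    ultimately have "walk_weight ?g (map (\<lambda>k. (1::nat, k)) [1..<Suc j+1]) = walk_weight ?g (map (\<lambda>k. (1::nat, k)) [1..<j+1]) + (h(1,j+1) - h(1,j))"
      by (simp only: u map_append list.map walk_snoc ne l if_False)
    then show ?case using Suc by simp
  qed
  obtain i j where ij: "v = (i,j)" "i \<in> {1,2}" "1 \<le> j" "j \<le> n" using v unfolding dual_vertices_def by auto
  show ?thesis
  proof (cases "i = 1")
    case True
    then show ?thesis using row[OF ij(3,4)] ij unfolding path_from_v11_def by simp
  next
    case False
    then have i2: "i = 2" using ij by auto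
    have l: "last (map (\<lambda>k. (1::nat, k)) [1..<j+1]) = (1,j)" using ij by (simp add: last_map)
    have "\<bar>h(2,j) - h(1,j)\<bar> = 1" using rep_edges(3)[OF mv r ij(3,4)] .
    then have "edge_weight ?g (1,j) (2,j) = h(2,j) - h(1,j)" by (rule ew)
    moreover have ne: "map (\<lambda>k. (1::nat, k)) [1..<j+1] \<noteq> []" using ij by simp
    moreover have p: "path_from_v11 v = map (\<lambda>k. (1::nat,k)) [1..<j+1] @ [(2,j)]"
      unfolding path_from_v11_def using ij i2 by simp
    ultimately have "walk_weight ?g (path_from_v11 v) = walk_weight ?g (map (\<lambda>k. (1::nat, k)) [1..<j+1]) + (h(2,j) - h(1,j))"
      by (simp only: p walk_snoc ne l if_False)
    then show ?thesis using row[OF ij(3,4)] ij i2 by simp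
  qed
qed

lemma adj_abs:
  assumes mv: "mv_assignment n \<mu>" and r: "rep n \<mu> h" and a: "dual_adj n u v"
  shows "\<bar>h u - h v\<bar> = 1"
proof -
  obtain i j i' j' where u: "u = (i,j)" "i \<in> {1,2}" "1 \<le> j" "j \<le> n" and v: "v = (i',j')" "i' \<in> {1,2}" "1 \<le> j'" "j' \<le> n"
    using a unfolding dual_adj_def dual_vertices_def by auto
  consider (r1) "i = i'" "j' = j + 1" | (r2) "i = i'" "j = j' + 1" | (c) "j = j'" "i \<noteq> i'"
    using a u v unfolding dual_adj_def by auto
  then show ?thesis
  proof cases
    case r1 then show ?thesis using hedge[OF mv r u(2) u(3), of ] u v by (auto simp: abs_minus_commute)
  next
    case r2 then show ?thesis using hedge[OF mv r v(2) v(3), of ] u v by auto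
  next
    case c
    then have "(i = 1 \<and> i' = 2) \<or> (i = 2 \<and> i' = 1)" using u v by auto
    then show ?thesis using rep_edges(3)[OF mv r u(3,4)] u v c by (auto simp: abs_minus_commute)
  qed
qed

lemma mod3_ne: "\<bar>x - y\<bar> = 1 \<Longrightarrow> x mod 3 \<noteq> y mod 3" for x y :: int
proof
  assume a: "\<bar>x - y\<bar> = 1" "x mod 3 = y mod 3"
  then have "(x - y) mod 3 = 0" by (simp add: mod_diff_eq[symmetric])
  moreover have "x - y = 1 \<or> x - y = -1" using a by auto
  ultimately show False by auto
qed

lemma col_proper:
  assumes "mv_assignment n \<mu>" "rep n \<mu> h"
  shows "proper_3coloring n (\<lambda>v. h v mod 3)"
proof -
  have "x mod 3 \<in> {0,1,2}" for x :: int
  proof -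
    have "0 \<le> x mod 3" "x mod 3 < 3" by auto
    then show ?thesis by auto
  qed
  then show ?thesis unfolding proper_3coloring_def using adj_abs[OF assms] mod3_ne by blast
qed

lemma cong3: "a = b + c \<Longrightarrow> [a mod 3 = b mod 3 + c] (mod 3)" for a b c :: int
  unfolding cong_def by (simp add: mod_add_left_eq)

lemma col_corr:
  assumes "rep n \<mu> h" "n \<ge> 1"
  shows "corresponds n (\<lambda>v. h v mod 3) \<mu>"
  unfolding corresponds_def
proof (intro conjI ballI)
  fix j assume j: "j \<in> {1..n-1}"
  then show "[h(1,j+1) mod 3 = h(1,j) mod 3 + \<mu>(3*j-1)] (mod 3)"
    using rep_facts(1)[OF assms(1), of j] assms(2) by (intro cong3) auto
next
  show "[h(2,n) mod 3 = h(1,n) mod 3 + \<mu>(3*n-3)] (mod 3)"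
    using rep_facts(4)[OF assms(1), of n] assms(2) by (intro cong3) auto
next
  fix j assume j: "j \<in> {2..n}"
  then have e: "3*j-2 = 3*(j-1)+1" "j - 1 + 1 = j" by auto
  show "[h(2,j-1) mod 3 = h(2,j) mod 3 + \<mu>(3*j-2)] (mod 3)"
    unfolding e(1) using rep_facts(2)[OF assms(1), of "j-1"] j e(2) by (intro cong3) auto
qed

lemma half_le: "(x::int) \<le> 2 * c \<Longrightarrow> real_of_int x / 2 \<le> real_of_int c"
  by simp

lemma part1:
  assumes n2: "n \<ge> 2" and lv: "locally_valid n \<mu>1" "locally_valid n \<mu>2"
  shows "\<exists>\<gamma> \<beta>. proper_3coloring n \<gamma> \<and> proper_3coloring n \<beta> \<and>
                     corresponds n \<gamma> \<mu>1 \<and> corresponds n \<beta> \<mu>2 \<and>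
                     (\<exists>H::int. even H \<and>
                        real_of_int (\<Sum>v\<in>dual_vertices n. \<bar>H + rel_height \<gamma> \<beta> v\<bar>) / 2
                          \<le> of_int \<lceil>real (n^2) / 2\<rceil>)"
proof -
  have mv: "mv_assignment n \<mu>1" "mv_assignment n \<mu>2" using lv locally_valid_def by auto
  note r1 = rep_hgt[OF lv(1)] and r2 = rep_hgt[OF lv(2)]
  let ?h1 = "hgt \<mu>1" and ?h2 = "hgt \<mu>2"
  obtain m where m: "(\<Sum>v\<in>dual_vertices n. \<bar>?h1 v - ?h2 v - 2*m\<bar>) \<le> 2 * Cn n"
    using core2[OF n2 mv r1(1) r2(1)] r1(2) r2(2) by auto
  define \<gamma> where "\<gamma> v = ?h1 v mod 3" for v
  define \<beta> where "\<beta> v = ?h2 v mod 3" for v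
  have rh: "rel_height \<gamma> \<beta> v = ?h2 v - ?h1 v" if "v \<in> dual_vertices n" for v
    unfolding rel_height_def \<gamma>_def \<beta>_def using walk_path[OF mv(1) r1(1) that] walk_path[OF mv(2) r2(1) that] r1(2) r2(2)
    by simp
  have "(\<Sum>v\<in>dual_vertices n. \<bar>2*m + rel_height \<gamma> \<beta> v\<bar>) = (\<Sum>v\<in>dual_vertices n. \<bar>?h1 v - ?h2 v - 2*m\<bar>)"
  proof (rule sum.cong)
    fix v assume "v \<in> dual_vertices n"
    then have e: "2*m + rel_height \<gamma> \<beta> v = -(?h1 v - ?h2 v - 2*m)" using rh by simp
    show "\<bar>2*m + rel_height \<gamma> \<beta> v\<bar> = \<bar>?h1 v - ?h2 v - 2*m\<bar>" unfolding e abs_minus_cancel ..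
  qed simp
  then have "(\<Sum>v\<in>dual_vertices n. \<bar>2*m + rel_height \<gamma> \<beta> v\<bar>) \<le> 2 * Cn n" using m by linarith
  then have "real_of_int (\<Sum>v\<in>dual_vertices n. \<bar>2*m + rel_height \<gamma> \<beta> v\<bar>) / 2 \<le> of_int \<lceil>real (n^2) / 2\<rceil>"
    unfolding ceil_Cn by (rule half_le)
  moreover have "proper_3coloring n \<gamma>" "proper_3coloring n \<beta>" unfolding \<gamma>_def \<beta>_def
    using col_proper[OF mv(1) r1(1)] col_proper[OF mv(2) r2(1)] by auto
  moreover have "corresponds n \<gamma> \<mu>1" "corresponds n \<beta> \<mu>2" unfolding \<gamma>_def \<beta>_def
    using col_corr[OF r1(1)] col_corr[OF r2(1)] n2 by auto
  ultimately show ?thesis by (intro exI[of _ \<gamma>] exI[of _ \<beta>]) (auto intro!: exI[of _ "2*m"])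
qed

lemma flip_distinct:
  assumes n2: "n \<ge> 2" and mv: "mv_assignment n \<mu>" and a: "\<alpha> \<in> faces n" "\<beta> \<in> faces n" "\<alpha> \<noteq> \<beta>"
  shows "face_flip n \<alpha> \<mu> \<noteq> face_flip n \<beta> \<mu>"
proof -
  obtain i j where ij0: "\<alpha> = (i,j)" by (cases \<alpha>)
  obtain i' j' where ij0': "\<beta> = (i',j')" by (cases \<beta>)
  have ij: "\<alpha> = (i,j)" "i \<in> {1,2}" "1 \<le> j" "j \<le> n" using a(1) ij0 unfolding faces_def by auto
  have ij': "\<beta> = (i',j')" "i' \<in> {1,2}" "1 \<le> j'" "j' \<le> n" using a(2) ij0' unfolding faces_def by auto
  have "\<exists>c\<in>creases n. (c \<in> face_border n \<alpha>) \<noteq> (c \<in> face_border n \<beta>)"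
  proof (cases "j = j'")
    case False
    then show ?thesis using B3[OF ij(3) ij(2,3)] B3[OF ij(3) ij'(2,3)] crease_idx2[OF ij(3,4)] ij ij' by (intro bexI[of _ "3*j-3"]) auto
  next
    case True
    then have ii: "i \<noteq> i'" using a ij ij' by auto
    show ?thesis
    proof (cases "j \<ge> 2")
      case True
      then have k: "1 \<le> j - 1" "j - 1 < n" using ij by auto
      show ?thesis using B1[OF k ij(2,3)] B1[OF k ij'(2,3)] crease_idx(1)[OF k] ii ij ij' True \<open>j = j'\<close>
        by (intro bexI[of _ "3*(j-1)-1"]) auto
    next
      case False
      then have k: "1 \<le> j" "j < n" using ij n2 by auto
      show ?thesis using B1[OF k ij(2,3)] B1[OF k ij'(2,3)] crease_idx(1)[OF k] ii ij ij' \<open>j = j'\<close>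
        by (intro bexI[of _ "3*j-1"]) auto
    qed
  qed
  then obtain c where c: "c \<in> creases n" "(c \<in> face_border n \<alpha>) \<noteq> (c \<in> face_border n \<beta>)" by auto
  have "\<mu> c \<noteq> 0" using mv_val[OF mv c(1)] by auto
  then have "face_flip n \<alpha> \<mu> c \<noteq> face_flip n \<beta> \<mu> c" using c(2) unfolding face_flip_def by auto
  then show ?thesis by metis
qed

lemma deg_card:
  assumes n2: "n \<ge> 2" and lv: "locally_valid n \<mu>"
  shows "ofg_degree n \<mu> = card {\<alpha>. flippable n \<mu> \<alpha>}"
proof -
  have mv: "mv_assignment n \<mu>" using lv locally_valid_def by auto
  have e: "{\<nu>. ofg_adj n \<mu> \<nu>} = (\<lambda>\<alpha>. face_flip n \<alpha> \<mu>) ` {\<alpha>. flippable n \<mu> \<alpha>}"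
    unfolding ofg_adj_def by auto
  have "inj_on (\<lambda>\<alpha>. face_flip n \<alpha> \<mu>) {\<alpha>. flippable n \<mu> \<alpha>}"
    by (rule inj_onI) (use flip_distinct[OF n2 mv] in \<open>auto simp: flippable_def\<close>)
  then show ?thesis unfolding ofg_degree_def e by (rule card_image)
qed

definition upv :: "(nat\<times>nat \<Rightarrow> int) \<Rightarrow> nat \<Rightarrow> nat \<times> nat" where
  "upv h j = (if h(1,j) > h(2,j) then 1 else 2, j)"
definition lowv :: "(nat\<times>nat \<Rightarrow> int) \<Rightarrow> nat \<Rightarrow> nat \<times> nat" where
  "lowv h j = (if h(1,j) > h(2,j) then 2 else 1, j)"

lemma ar1: "\<bar>a'-a\<bar> = 1 \<Longrightarrow> \<bar>b'-b\<bar> = 1 \<Longrightarrow> \<bar>b'-a'\<bar> = 1 \<Longrightarrow> a = b + 1 \<Longrightarrow> a'+b' \<le> a+b \<Longrightarrow> a' = b" for a b a' b' :: int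
  by arith
lemma ar2: "\<bar>a'-a\<bar> = 1 \<Longrightarrow> \<bar>b'-b\<bar> = 1 \<Longrightarrow> \<bar>b'-a'\<bar> = 1 \<Longrightarrow> a = b + 1 \<Longrightarrow> a'+b' \<ge> a+b \<Longrightarrow> b' = a" for a b a' b' :: int
  by arith

lemma wext:
  assumes mv: "mv_assignment n \<mu>" and r: "rep n \<mu> h" and j: "1 \<le> j" "j \<le> n"
  defines "s \<equiv> \<lambda>j. h(1,j) + h(2,j)"
  shows "(2 \<le> j \<longrightarrow> s (j-1) \<le> s j) \<Longrightarrow> (j < n \<longrightarrow> s (j+1) \<le> s j) \<Longrightarrow> lext n h (upv h j)"
    and "(2 \<le> j \<longrightarrow> s (j-1) \<ge> s j) \<Longrightarrow> (j < n \<longrightarrow> s (j+1) \<ge> s j) \<Longrightarrow> lext n h (lowv h j)"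
proof -
  have v: "\<bar>h(2,j) - h(1,j)\<bar> = 1" using rep_edges(3)[OF mv r j] .
  have R: "\<bar>h(1,j+1) - h(1,j)\<bar> = 1" "\<bar>h(2,j+1) - h(2,j)\<bar> = 1" "\<bar>h(2,j+1) - h(1,j+1)\<bar> = 1" if "j < n"
    using rep_edges[OF mv r] that j by auto
  have L: "\<bar>h(1,j-1) - h(1,j)\<bar> = 1" "\<bar>h(2,j-1) - h(2,j)\<bar> = 1" "\<bar>h(2,j-1) - h(1,j-1)\<bar> = 1" if "2 \<le> j"
  proof -
    have k: "1 \<le> j-1" "j - 1 < n" "j - 1 + 1 = j" "j - 1 \<le> n" using that j by auto
    show "\<bar>h(1,j-1) - h(1,j)\<bar> = 1" "\<bar>h(2,j-1) - h(2,j)\<bar> = 1"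
      using rep_edges(1,2)[OF mv r k(1,2)] k(3) by (auto simp: abs_minus_commute)
    show "\<bar>h(2,j-1) - h(1,j-1)\<bar> = 1" using rep_edges(3)[OF mv r k(1,4)] .
  qed
  show "lext n h (upv h j)" if a: "2 \<le> j \<longrightarrow> s (j-1) \<le> s j" "j < n \<longrightarrow> s (j+1) \<le> s j"
  proof (cases "h(1,j) > h(2,j)")
    case True
    then have e: "h(1,j) = h(2,j) + 1" using v by auto
    have "h(1,j+1) = h(2,j)" if "j < n" using ar1[OF R[OF that] e] a(2) that unfolding s_def by auto
    moreover have "h(1,j-1) = h(2,j)" if "2 \<le> j" using ar1[OF L[OF that] e] a(1) that unfolding s_def by auto
    ultimately show ?thesis unfolding upv_def lext_def using True by auto
  next
    case False
    then have e: "h(2,j) = h(1,j) + 1" using v by auto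
    have "h(2,j+1) = h(1,j)" if "j < n" using ar1[of "h(2,j+1)" "h(2,j)" "h(1,j+1)" "h(1,j)"] R[OF that] e a(2) that
      unfolding s_def by (auto simp: abs_minus_commute)
    moreover have "h(2,j-1) = h(1,j)" if "2 \<le> j" using ar1[of "h(2,j-1)" "h(2,j)" "h(1,j-1)" "h(1,j)"] L[OF that] e a(1) that
      unfolding s_def by (auto simp: abs_minus_commute)
    ultimately show ?thesis unfolding upv_def lext_def using False by auto
  qed
  show "lext n h (lowv h j)" if a: "2 \<le> j \<longrightarrow> s (j-1) \<ge> s j" "j < n \<longrightarrow> s (j+1) \<ge> s j"
  proof (cases "h(1,j) > h(2,j)")
    case True
    then have e: "h(1,j) = h(2,j) + 1" using v by auto
    have "h(2,j+1) = h(1,j)" if "j < n" using ar2[OF R[OF that] e] a(2) that unfolding s_def by auto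
    moreover have "h(2,j-1) = h(1,j)" if "2 \<le> j" using ar2[OF L[OF that] e] a(1) that unfolding s_def by auto
    ultimately show ?thesis unfolding lowv_def lext_def using True by auto
  next
    case False
    then have e: "h(2,j) = h(1,j) + 1" using v by auto
    have "h(1,j+1) = h(2,j)" if "j < n" using ar2[of "h(2,j+1)" "h(2,j)" "h(1,j+1)" "h(1,j)"] R[OF that] e a(2) that
      unfolding s_def by (auto simp: abs_minus_commute)
    moreover have "h(1,j-1) = h(2,j)" if "2 \<le> j" using ar2[of "h(2,j-1)" "h(2,j)" "h(1,j-1)" "h(1,j)"] L[OF that] e a(1) that
      unfolding s_def by (auto simp: abs_minus_commute)
    ultimately show ?thesis unfolding lowv_def lext_def using False by auto
  qed
qed

lemma three:
  assumes n2: "n \<ge> 2" and lv: "locally_valid n \<mu>" and r: "rep n \<mu> h"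
  defines "s \<equiv> \<lambda>j. h(1,j) + h(2,j)"
  assumes ninc: "\<exists>j. 1 \<le> j \<and> j < n \<and> s (j+1) \<noteq> s j + 2"
    and ndec: "\<exists>j. 1 \<le> j \<and> j < n \<and> s (j+1) \<noteq> s j - 2"
  shows "card {\<alpha>. flippable n \<mu> \<alpha>} \<ge> 3"
proof -
  have mv: "mv_assignment n \<mu>" using lv locally_valid_def by auto
  define F where "F = {\<alpha>. flippable n \<mu> \<alpha>}"
  have fF: "finite F" unfolding F_def flippable_def faces_def
    by (rule finite_subset[of _ "{1,2} \<times> {1..n}"]) auto
  have fcs: "upv h j \<in> faces n" "lowv h j \<in> faces n" if "1 \<le> j" "j \<le> n" for j
    using that unfolding upv_def lowv_def faces_def by auto
  have flU: "upv h j \<in> F" if j: "1 \<le> j" "j \<le> n" and a: "2 \<le> j \<longrightarrow> s (j-1) \<le> s j" "j < n \<longrightarrow> s (j+1) \<le> s j" for j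
  proof -
    have "lext n h (upv h j)" using wext(1)[OF mv r j] a unfolding s_def by auto
    then show ?thesis unfolding F_def using flippable_iff[OF lv r, of "fst (upv h j)" "snd (upv h j)"] fcs[OF j] by auto
  qed
  have flL: "lowv h j \<in> F" if j: "1 \<le> j" "j \<le> n" and a: "2 \<le> j \<longrightarrow> s (j-1) \<ge> s j" "j < n \<longrightarrow> s (j+1) \<ge> s j" for j
  proof -
    have "lext n h (lowv h j)" using wext(2)[OF mv r j] a unfolding s_def by auto
    then show ?thesis unfolding F_def using flippable_iff[OF lv r, of "fst (lowv h j)" "snd (lowv h j)"] fcs[OF j] by auto
  qed
  have stp: "s (j+1) = s j + 2 \<or> s (j+1) = s j \<or> s (j+1) = s j - 2" if "1 \<le> j" "j < n" for j
    using rep_edges(1,2)[OF mv r that] unfolding s_def by auto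
  have d1: "upv h j \<noteq> lowv h j'" for j j' unfolding upv_def lowv_def by auto
  have d2: "upv h j \<noteq> upv h j'" "lowv h j \<noteq> lowv h j'" if "j \<noteq> j'" for j j' using that unfolding upv_def lowv_def by auto
  have c3: "card F \<ge> 3" if "a \<in> F" "b \<in> F" "c \<in> F" "a \<noteq> b" "a \<noteq> c" "b \<noteq> c" for a b c
  proof -
    have "card {a,b,c} = 3" using that by auto
    moreover have "card {a,b,c} \<le> card F" using that fF by (intro card_mono) auto
    ultimately show ?thesis by simp
  qed
  have "s (n-1) \<le> s n \<or> s (n-1) \<ge> s n" by auto
  obtain p where p: "p \<in> {1..n}" "\<And>j. j \<in> {1..n} \<Longrightarrow> s j \<le> s p"
  proof -
    have "Max (s ` {1..n}) \<in> s ` {1..n}" using n2 by (intro Max_in) auto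
    then obtain p where "p \<in> {1..n}" "s p = Max (s ` {1..n})" by auto
    then show ?thesis using that by auto
  qed
  obtain q where q: "q \<in> {1..n}" "\<And>j. j \<in> {1..n} \<Longrightarrow> s q \<le> s j"
  proof -
    have "Min (s ` {1..n}) \<in> s ` {1..n}" using n2 by (intro Min_in) auto
    then obtain q where "q \<in> {1..n}" "s q = Min (s ` {1..n})" by auto
    then show ?thesis using that by auto
  qed
  have upP: "upv h p \<in> F"
  proof (rule flU)
    show "2 \<le> p \<longrightarrow> s (p-1) \<le> s p"
    proof
      assume "2 \<le> p" then have "p - 1 \<in> {1..n}" using p(1) by auto
      then show "s (p-1) \<le> s p" by (rule p(2))
    qed
    show "p < n \<longrightarrow> s (p+1) \<le> s p"
    proof
      assume "p < n" then have "p + 1 \<in> {1..n}" by auto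
      then show "s (p+1) \<le> s p" by (rule p(2))
    qed
  qed (use p(1) in auto)
  have lowQ: "lowv h q \<in> F"
  proof (rule flL)
    show "2 \<le> q \<longrightarrow> s (q-1) \<ge> s q"
    proof
      assume "2 \<le> q" then have "q - 1 \<in> {1..n}" using q(1) by auto
      then show "s (q-1) \<ge> s q" by (rule q(2))
    qed
    show "q < n \<longrightarrow> s (q+1) \<ge> s q"
    proof
      assume "q < n" then have "q + 1 \<in> {1..n}" by auto
      then show "s (q+1) \<ge> s q" by (rule q(2))
    qed
  qed (use q(1) in auto)
  have n1: "n - 1 \<in> {1..n}" "2 \<in> {1..n}" using n2 by auto
  consider (A) "s 2 \<le> s 1" "s (n-1) \<le> s n" | (B) "s 2 \<ge> s 1" "s (n-1) \<ge> s n"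
    | (C) "s 2 > s 1" "s (n-1) < s n" | (D) "s 2 < s 1" "s (n-1) > s n" by linarith
  then show ?thesis
  proof cases
    case A
    have u1: "upv h 1 \<in> F" using A n2 by (intro flU) (auto simp: numeral_2_eq_2)
    have un: "upv h n \<in> F" using A n2 by (intro flU) (auto simp: numeral_2_eq_2)
    have "(1::nat) \<noteq> n" using n2 by auto
    have "card F \<ge> 3" by (rule c3[OF u1 un lowQ d2(1)[OF \<open>1 \<noteq> n\<close>] d1 d1])
    then show ?thesis unfolding F_def .
  next
    case B
    have l1: "lowv h 1 \<in> F" using B n2 by (intro flL) (auto simp: numeral_2_eq_2)
    have ln: "lowv h n \<in> F" using B n2 by (intro flL) (auto simp: numeral_2_eq_2)
    have "(1::nat) \<noteq> n" using n2 by auto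
    have "card F \<ge> 3" by (rule c3[OF l1 ln upP d2(2)[OF \<open>1 \<noteq> n\<close>] d1[THEN not_sym] d1[THEN not_sym]])
    then show ?thesis unfolding F_def .
  next
    case C
    let ?P = "\<lambda>j. 1 \<le> j \<and> j < n \<and> s (j+1) \<noteq> s j + 2"
    obtain j0 where j0: "?P j0" "\<And>j. j < j0 \<Longrightarrow> \<not> ?P j" using ninc exists_least_iff[of ?P] by blast
    have "j0 \<noteq> 1" using stp[of 1] C j0(1) n2 by (auto simp: numeral_2_eq_2)
    then have j02: "2 \<le> j0" using j0(1) by auto
    have "\<not> ?P (j0 - 1)" using j0(2)[of "j0-1"] j02 by auto
    then have "s j0 = s (j0-1) + 2" using j02 j0(1) by (auto simp: le_diff_conv2)
    moreover have "s (j0+1) \<le> s j0" using stp[of j0] j0(1) by auto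
    ultimately have u0: "upv h j0 \<in> F" using j0(1) by (intro flU) auto
    have l1: "lowv h 1 \<in> F" using C n2 by (intro flL) (auto simp: numeral_2_eq_2)
    have un: "upv h n \<in> F" using C n2 by (intro flU) (auto simp: numeral_2_eq_2)
    have "j0 \<noteq> n" using j0(1) by auto
    have "card F \<ge> 3" by (rule c3[OF u0 un l1 d2(1)[OF \<open>j0 \<noteq> n\<close>] d1 d1])
    then show ?thesis unfolding F_def .
  next
    case D
    let ?P = "\<lambda>j. 1 \<le> j \<and> j < n \<and> s (j+1) \<noteq> s j - 2"
    obtain j0 where j0: "?P j0" "\<And>j. j < j0 \<Longrightarrow> \<not> ?P j" using ndec exists_least_iff[of ?P] by blast
    have "j0 \<noteq> 1" using stp[of 1] D j0(1) n2 by (auto simp: numeral_2_eq_2)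
    then have j02: "2 \<le> j0" using j0(1) by auto
    have "\<not> ?P (j0 - 1)" using j0(2)[of "j0-1"] j02 by auto
    then have "s j0 = s (j0-1) - 2" using j02 j0(1) by (auto simp: le_diff_conv2)
    moreover have "s (j0+1) \<ge> s j0" using stp[of j0] j0(1) by auto
    ultimately have u0: "lowv h j0 \<in> F" using j0(1) by (intro flL) auto
    have u1: "upv h 1 \<in> F" using D n2 by (intro flU) (auto simp: numeral_2_eq_2)
    have ln: "lowv h n \<in> F" using D n2 by (intro flL) (auto simp: numeral_2_eq_2)
    have "j0 \<noteq> n" using j0(1) by auto
    have "card F \<ge> 3" by (rule c3[OF u0 ln u1 d2(2)[OF \<open>j0 \<noteq> n\<close>] d1[THEN not_sym] d1[THEN not_sym]])
    then show ?thesis unfolding F_def .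
  qed
qed

lemma deg2_lb:
  assumes n2: "n \<ge> 2" and lv: "locally_valid n \<mu>" and r: "rep n \<mu> h" and deg: "ofg_degree n \<mu> = 2"
  shows "(\<Sum>v\<in>dual_vertices n. \<bar>h v - m\<bar>) \<ge> Cn n"
proof -
  have mv: "mv_assignment n \<mu>" using lv locally_valid_def by auto
  define s where "s j = h(1,j) + h(2,j)" for j
  have "card {\<alpha>. flippable n \<mu> \<alpha>} = 2" using deg deg_card[OF n2 lv] by simp
  then have mono: "(\<forall>j. 1 \<le> j \<and> j < n \<longrightarrow> s (j+1) = s j + 2) \<or> (\<forall>j. 1 \<le> j \<and> j < n \<longrightarrow> s (j+1) = s j - 2)"
  proof -
    assume c2: "card {\<alpha>. flippable n \<mu> \<alpha>} = 2"
    show ?thesis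
    proof (rule ccontr)
      assume "\<not> ?thesis"
      then have a: "\<exists>j. 1 \<le> j \<and> j < n \<and> s (j+1) \<noteq> s j + 2" "\<exists>j. 1 \<le> j \<and> j < n \<and> s (j+1) \<noteq> s j - 2" by auto
      have "card {\<alpha>. flippable n \<mu> \<alpha>} \<ge> 3" by (rule three[OF n2 lv r a[unfolded s_def]])
      then show False using c2 by simp
    qed
  qed
  have "(\<Sum>v\<in>dual_vertices n. \<bar>h v - m\<bar>) = (\<Sum>j\<in>{1..n}. \<bar>h(1,j) - m\<bar> + \<bar>h(2,j) - m\<bar>)" by (rule sumV)
  also have "\<dots> = (\<Sum>j\<in>{1..n}. \<bar>s j - 2*m\<bar>)"
  proof (rule sum.cong)
    fix j assume "j \<in> {1..n}"
    then have "\<bar>h(1,j) - h(2,j)\<bar> \<le> 1" using rep_edges(3)[OF mv r, of j] by auto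
    then show "\<bar>h(1,j) - m\<bar> + \<bar>h(2,j) - m\<bar> = \<bar>s j - 2*m\<bar>" unfolding s_def by (rule col_id)
  qed simp
  also have "\<dots> = (\<Sum>j<n. \<bar>s (Suc j) - 2*m\<bar>)"
  proof -
    have "{1..n} = {Suc 0..n}" by simp
    then show ?thesis by (simp only: sum.atLeast1_atMost_eq)
  qed
  finally have e: "(\<Sum>v\<in>dual_vertices n. \<bar>h v - m\<bar>) = (\<Sum>j<n. \<bar>s (Suc j) - 2*m\<bar>)" .
  have "\<bar>h(2,1) - h(1,1)\<bar> = 1" using rep_edges(3)[OF mv r, of 1] n2 by auto
  then have "s 1 = 2*h(1,1) + 1 \<or> s 1 = 2*h(1,1) - 1" unfolding s_def by auto
  then have s1: "odd (s 1)" by auto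
  from mono show ?thesis
  proof
    assume inc: "\<forall>j. 1 \<le> j \<and> j < n \<longrightarrow> s (j+1) = s j + 2"
    have sj: "s (Suc j) = s 1 + 2 * int j" if "j < n" for j
      using that
    proof (induction j)
      case 0 then show ?case by simp
    next
      case (Suc j)
      then have "s (Suc j + 1) = s (Suc j) + 2" using inc by auto
      then show ?case using Suc by simp
    qed
    have "(\<Sum>j<n. \<bar>s (Suc j) - 2*m\<bar>) = (\<Sum>j<n. \<bar>2 * int j + (s 1 - 2*m)\<bar>)"
    proof (rule sum.cong)
      fix j assume "j \<in> {..<n}"
      then have "j < n" by simp
      then have "s (Suc j) = s 1 + 2 * int j" by (rule sj)
      then have "s (Suc j) - 2*m = 2 * int j + (s 1 - 2*m)" by simp
      then show "\<bar>s (Suc j) - 2*m\<bar> = \<bar>2 * int j + (s 1 - 2*m)\<bar>" by (simp only:)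
    qed simp
    moreover have "odd (s 1 - 2*m)" using s1 by simp
    then have "Cn n \<le> (\<Sum>j<n. \<bar>2 * int j + (s 1 - 2*m)\<bar>)" by (rule lb)
    ultimately show ?thesis using e by linarith
  next
    assume dec: "\<forall>j. 1 \<le> j \<and> j < n \<longrightarrow> s (j+1) = s j - 2"
    have sj: "s (Suc j) = s 1 - 2 * int j" if "j < n" for j
      using that
    proof (induction j)
      case 0 then show ?case by simp
    next
      case (Suc j)
      then have "s (Suc j + 1) = s (Suc j) - 2" using dec by auto
      then show ?case using Suc by simp
    qed
    have "(\<Sum>j<n. \<bar>s (Suc j) - 2*m\<bar>) = (\<Sum>j<n. \<bar>2 * int j + (2*m - s 1)\<bar>)"
    proof (rule sum.cong)
      fix j assume "j \<in> {..<n}"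
      then have "j < n" by simp
      then have "s (Suc j) = s 1 - 2 * int j" by (rule sj)
      then have "s (Suc j) - 2*m = - (2 * int j + (2*m - s 1))" by simp
      then show "\<bar>s (Suc j) - 2*m\<bar> = \<bar>2 * int j + (2*m - s 1)\<bar>" by (simp only: abs_minus_cancel)
    qed simp
    moreover have "odd (2*m - s 1)" using s1 by simp
    then have "Cn n \<le> (\<Sum>j<n. \<bar>2 * int j + (2*m - s 1)\<bar>)" by (rule lb)
    ultimately show ?thesis using e by linarith
  qed
qed



lemma rep_neg: "rep n \<mu> h \<Longrightarrow> rep n (\<lambda>c. - \<mu> c) (\<lambda>v. - h v)"
  unfolding rep_def by auto

lemma mv_neg: "mv_assignment n \<mu> \<Longrightarrow> mv_assignment n (\<lambda>c. - \<mu> c)"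
  unfolding mv_assignment_def by auto

lemma lv_neg: "locally_valid n \<mu> \<Longrightarrow> locally_valid n (\<lambda>c. - \<mu> c)"
  using rep_lv[OF mv_neg rep_neg[OF rep_hgt(1)]] locally_valid_def by blast

lemma lext_neg: "lext n (\<lambda>v. - h v) \<alpha> \<longleftrightarrow> lext n h \<alpha>"
  unfolding lext_def by (cases \<alpha>) auto

lemma flset_neg:
  assumes lv: "locally_valid n \<mu>"
  shows "{\<alpha>. flippable n (\<lambda>c. - \<mu> c) \<alpha>} = {\<alpha>. flippable n \<mu> \<alpha>}"
proof -
  note r = rep_hgt(1)[OF lv]
  have lv': "locally_valid n (\<lambda>c. - \<mu> c)" using lv_neg[OF lv] .
  have "flippable n (\<lambda>c. - \<mu> c) (i,j) \<longleftrightarrow> flippable n \<mu> (i,j)" for i j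
  proof (cases "(i,j) \<in> faces n")
    case True
    show ?thesis using flippable_iff[OF lv r True] flippable_iff[OF lv' rep_neg[OF r] True] lext_neg by metis
  next
    case False then show ?thesis unfolding flippable_def by auto
  qed
  then show ?thesis by auto
qed

lemma deg_neg:
  assumes "n \<ge> 2" "locally_valid n \<mu>"
  shows "ofg_degree n (\<lambda>c. - \<mu> c) = ofg_degree n \<mu>"
  using deg_card[OF assms] deg_card[OF assms(1) lv_neg[OF assms(2)]] flset_neg[OF assms(2)] by simp

definition mu0 :: "nat \<Rightarrow> nat \<Rightarrow> int" where
  "mu0 n c = (if c \<in> creases n then (if c mod 3 = 1 then -1 else 1) else 0)"

lemma mu0_rep: "rep n (mu0 n) (\<lambda>v. int (fst v) + int (snd v))"
proof -
  have a: "mu0 n (3*k-1) = 1" "mu0 n (3*k+1) = -1" if kk: "1 \<le> k" "k < n" for k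
  proof -
    obtain k' where k': "k = Suc k'" using kk by (cases k) auto
    have e: "3*k-1 = 3*k'+2" "3*k+1 = 3*k'+4" unfolding k' by simp_all
    have "(3*k'+2) mod 3 = (2::nat)" "(3*k'+4) mod 3 = (1::nat)" by presburger+
    then have "(3*k-1) mod 3 \<noteq> 1" "(3*k+1) mod 3 = 1" unfolding e by simp_all
    then show "mu0 n (3*k-1) = 1" "mu0 n (3*k+1) = -1" using crease_idx[OF kk] unfolding mu0_def by auto
  qed
  have b: "mu0 n (3*j-3) = 1" if jj: "1 \<le> j" "j \<le> n" for j
  proof -
    obtain j' where j': "j = Suc j'" using jj by (cases j) auto
    have "3*j-3 = 3*j'" unfolding j' by simp
    then have "(3*j-3) mod 3 = 0" by simp
    then show ?thesis using crease_idx2[OF jj] unfolding mu0_def by auto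
  qed
  show ?thesis unfolding rep_def
  proof (intro conjI allI impI)
    fix k assume k: "1 \<le> k \<and> k < n"
    then show "mu0 n (3*k-1) = int (fst (1::nat, k+1)) + int (snd (1::nat, k+1)) - (int (fst (1::nat, k)) + int (snd (1::nat, k)))"
      using a(1)[of k] by simp
    show "mu0 n (3*k+1) = int (fst (2::nat, k)) + int (snd (2::nat, k)) - (int (fst (2::nat, k+1)) + int (snd (2::nat, k+1)))"
      using a(2)[of k] k by simp
  next
    fix j assume j: "1 \<le> j \<and> j \<le> n"
    then show "mu0 n (3*j-3) = int (fst (2::nat, j)) + int (snd (2::nat, j)) - (int (fst (1::nat, j)) + int (snd (1::nat, j)))"
      using b[of j] by simp
  qed
qed

lemma mu0_lv: "locally_valid n (mu0 n)"
proof -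
  have mv: "mv_assignment n (mu0 n)" unfolding mv_assignment_def mu0_def by auto
  show ?thesis by (rule rep_lv[OF mv mu0_rep])
qed

lemma mu0_deg:
  assumes n2: "n \<ge> 2"
  shows "ofg_degree n (mu0 n) = 2"
proof -
  let ?h = "\<lambda>v. int (fst v) + int (snd v)"
  have "flippable n (mu0 n) (i,j) \<longleftrightarrow> (i,j) = (1,1) \<or> (i,j) = (2,n)" for i j
  proof (cases "(i,j) \<in> faces n")
    case True
    then have ij: "i \<in> {1,2}" "1 \<le> j" "j \<le> n" unfolding faces_def by auto
    have l1: "lext n ?h (1,j) \<longleftrightarrow> j = 1"
    proof -
      have "lext n ?h (1,j) \<longleftrightarrow> (2 \<le> j \<longrightarrow> int 1 + int (j-1) = int 2 + int j)" unfolding lext_def by simp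
      also have "\<dots> \<longleftrightarrow> \<not> 2 \<le> j" by (auto simp: of_nat_diff)
      finally show ?thesis using ij(2) by linarith
    qed
    have l2: "lext n ?h (2,j) \<longleftrightarrow> j = n"
    proof -
      have "lext n ?h (2,j) \<longleftrightarrow> (j < n \<longrightarrow> int 2 + int (j+1) = int 1 + int j)" unfolding lext_def by (auto simp: of_nat_diff)
      also have "\<dots> \<longleftrightarrow> \<not> j < n" by auto
      finally show ?thesis using ij(3) by linarith
    qed
    have "lext n ?h (i,j) \<longleftrightarrow> (i,j) = (1,1) \<or> (i,j) = (2,n)"
      using ij(1) l1 l2 n2 by auto
    then show ?thesis using flippable_iff[OF mu0_lv mu0_rep True] by simp
  next
    case False
    then show ?thesis using n2 unfolding flippable_def faces_def by auto
  qed
  then have "{\<alpha>. flippable n (mu0 n) \<alpha>} = {(1,1),(2,n)}" by auto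
  then show ?thesis using deg_card[OF n2 mu0_lv] by simp
qed

lemma opp_dist:
  assumes n2: "n \<ge> 2" and lv: "locally_valid n \<mu>" and deg: "ofg_degree n \<mu> = 2"
  shows "ofg_dist_is n \<mu> (\<lambda>c. - \<mu> c) (nat \<lceil>real (n^2) / 2\<rceil>)"
proof -
  note r = rep_hgt(1)[OF lv]
  let ?h = "hgt \<mu>"
  have lv': "locally_valid n (\<lambda>c. - \<mu> c)" using lv_neg[OF lv] .
  have lower: "Cn n \<le> int k" if p: "(ofg_adj n ^^ k) \<mu> (\<lambda>c. - \<mu> c)" for k
  proof -
    obtain c where c: "even (?h(1,1) - (- ?h(1,1)) - c)" "(\<Sum>v\<in>dual_vertices n. \<bar>?h v - (- ?h v) - c\<bar>) \<le> 2 * int k"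
      using low[OF p lv r rep_neg[OF r]] by auto
    have "even c" using c(1) by simp
    then obtain m where m: "c = 2*m" by auto
    have "(\<Sum>v\<in>dual_vertices n. \<bar>?h v - (- ?h v) - c\<bar>) = (\<Sum>v\<in>dual_vertices n. 2 * \<bar>?h v - m\<bar>)"
    proof (rule sum.cong)
      fix v
      have e: "?h v - (- ?h v) - c = 2 * (?h v - m)" using m by simp
      show "\<bar>?h v - (- ?h v) - c\<bar> = 2 * \<bar>?h v - m\<bar>" unfolding e abs_mult by simp
    qed simp
    also have "\<dots> = 2 * (\<Sum>v\<in>dual_vertices n. \<bar>?h v - m\<bar>)" by (simp add: sum_distrib_left)
    finally have "2 * (\<Sum>v\<in>dual_vertices n. \<bar>?h v - m\<bar>) \<le> 2 * int k" using c(2) by simp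
    moreover have "Cn n \<le> (\<Sum>v\<in>dual_vertices n. \<bar>?h v - m\<bar>)" by (rule deg2_lb[OF n2 lv r deg])
    ultimately show ?thesis by linarith
  qed
  obtain N where N: "int N \<le> Cn n" "(ofg_adj n ^^ N) \<mu> (\<lambda>c. - \<mu> c)" using dist_le[OF n2 lv lv'] by auto
  have "Cn n \<le> int N" using lower[OF N(2)] .
  then have NC: "nat \<lceil>real (n^2) / 2\<rceil> = N" using N(1) unfolding ceil_Cn by simp
  show ?thesis unfolding ofg_dist_is_def NC
  proof (intro conjI allI impI)
    show "(ofg_adj n ^^ N) \<mu> (\<lambda>c. - \<mu> c)" using N(2) .
  next
    fix k assume "k < N"
    then show "\<not> (ofg_adj n ^^ k) \<mu> (\<lambda>c. - \<mu> c)" using lower N(1) by fastforce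
  qed
qed

theorem theorem5p8:
  fixes n :: nat
  assumes "n \<ge> 2"
  shows "(\<forall>\<mu>1 \<mu>2. locally_valid n \<mu>1 \<and> locally_valid n \<mu>2 \<longrightarrow>
            (\<exists>\<gamma> \<beta>. proper_3coloring n \<gamma> \<and> proper_3coloring n \<beta> \<and>
                     corresponds n \<gamma> \<mu>1 \<and> corresponds n \<beta> \<mu>2 \<and>
                     (\<exists>H::int. even H \<and>
                        real_of_int (\<Sum>v\<in>dual_vertices n. \<bar>H + rel_height \<gamma> \<beta> v\<bar>) / 2
                          \<le> of_int \<lceil>real (n^2) / 2\<rceil>)))
       \<and> (\<forall>\<mu>1 \<mu>2. locally_valid n \<mu>1 \<and> locally_valid n \<mu>2 \<longrightarrow>
            (\<exists>k. k \<le> \<lceil>real (n^2) / 2\<rceil> \<and> (ofg_adj n ^^ nat k) \<mu>1 \<mu>2))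
       \<and> (\<exists>\<mu>. locally_valid n \<mu> \<and> ofg_degree n \<mu> = 2)
       \<and> (\<forall>\<mu>. locally_valid n \<mu> \<and> ofg_degree n \<mu> = 2 \<longrightarrow>
            locally_valid n (\<lambda>c. - \<mu> c) \<and> ofg_degree n (\<lambda>c. - \<mu> c) = 2 \<and>
            ofg_dist_is n \<mu> (\<lambda>c. - \<mu> c) (nat \<lceil>real (n^2) / 2\<rceil>))"
proof (intro conjI allI impI)
  fix \<mu>1 \<mu>2 assume a: "locally_valid n \<mu>1 \<and> locally_valid n \<mu>2"
  then show "\<exists>\<gamma> \<beta>. proper_3coloring n \<gamma> \<and> proper_3coloring n \<beta> \<and>
                     corresponds n \<gamma> \<mu>1 \<and> corresponds n \<beta> \<mu>2 \<and>
                     (\<exists>H::int. even H \<and>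
                        real_of_int (\<Sum>v\<in>dual_vertices n. \<bar>H + rel_height \<gamma> \<beta> v\<bar>) / 2
                          \<le> of_int \<lceil>real (n^2) / 2\<rceil>)"
    using part1[OF assms] by blast
next
  fix \<mu>1 \<mu>2 assume a: "locally_valid n \<mu>1 \<and> locally_valid n \<mu>2"
  then obtain N where N: "int N \<le> Cn n" "(ofg_adj n ^^ N) \<mu>1 \<mu>2" using dist_le[OF assms] by blast
  show "\<exists>k. k \<le> \<lceil>real (n^2) / 2\<rceil> \<and> (ofg_adj n ^^ nat k) \<mu>1 \<mu>2"
    unfolding ceil_Cn using N by auto
next
  show "\<exists>\<mu>. locally_valid n \<mu> \<and> ofg_degree n \<mu> = 2" using mu0_lv mu0_deg[OF assms] by blast
next
  fix \<mu> assume a: "locally_valid n \<mu> \<and> ofg_degree n \<mu> = 2"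
  show "locally_valid n (\<lambda>c. - \<mu> c)" using lv_neg a by blast
  show "ofg_degree n (\<lambda>c. - \<mu> c) = 2" using deg_neg[OF assms] a by auto
  show "ofg_dist_is n \<mu> (\<lambda>c. - \<mu> c) (nat \<lceil>real (n^2) / 2\<rceil>)" using opp_dist[OF assms] a by blast
qed

end
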